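(* Let $n$ be a positive integer, let $\Delta \ge 0$, and let $\varepsilon_1, \varepsilon_2, \varepsilon_3$ be positive reals. Let $\mathcal{X}$ and $\mathcal{Z}$ be Polish spaces and let $p_{X,Z}$ be a joint distribution on $\mathcal{X}\times\mathcal{Z}$ with marginal $p_X$ on $\mathcal{X}$. Let $d:\mathcal{X}\times\mathcal{X}\to[0,\infty)$ be a distortion measure such that $(d,p_X)$ is uniformly integrable. Let $Q_{X^n,Y^n}$ be a distribution on $\mathcal{X}^n\times\mathcal{X}^n$ satisfying $$\mathbb{E}_Q[d(X^n,Y^n)] \le \Delta+\varepsilon_1 \quad\text{and}\quad \|Q_{Y^n}-p_X^{\otimes n}\|_{TV}\le \varepsilon_2 .$$ Let $P^{(1)}$ be the distribution induced by an $(n,R,R_c)$ D-code (respectively, an $(n,R,R_c)$ E-D-code) for some reals $R,R_c\ge 0$, and assume that $$\|P^{(1)}_{X^n,Y^n}-Q_{X^n,Y^n}\|_{TV}\le\varepsilon_3 .$$ Then there exists an $(n,R,R_c)$ D-code (respectively, E-D-code) with the same encoder as the code inducing $P^{(1)}$, which induces a distribution $P^{(2)}$ satisfying $$\mathbb{E}_{P^{(2)}}[d(X^n,Y^n)] \le \Delta+\varepsilon_1+\sup_{X,Y,B}\mathbb{E}\big[d(X,Y)\,\mathbf{1}_B\big] \quad\text{and}\quad P^{(2)}_{Y^n}= p_X^{\otimes n},$$ where the supremum is over all pairs of random variables $X,Y$ (on a common probability space) each having law $p_X$ and all events $B$ with probability at most $\varepsilon_2+2\varepsilon_3$.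
   Context: Setting: lossy source coding with side information $Z^n$ and common randomness. The source is $(X^n,Z^n)\sim p_{X,Z}^{\otimes n}$ (i.i.d.). For $x^n,y^n\in\mathcal{X}^n$, $d(x^n,y^n)=\frac1n\sum_{t=1}^n d(x_t,y_t)$. The pair $(d,p_X)$ is uniformly integrable if $\sup_{X,Y,B}\mathbb{E}[d(X,Y)\mathbf{1}_B]\to 0$ as $\tau\to 0$, where the supremum is over all random variables $X,Y$ each with law $p_X$ and all events $B$ with $\mathbb{P}(B)\le\tau$. An $(n,R,R_c)$ D-code consists of a common randomness $J$ uniformly distributed on $\{1,\dots,\lfloor 2^{nR_c}\rfloor\}$ independent of the source, a (possibly randomized) encoder given by a conditional distribution $F_{M\mid X^n,J}$ with message $M\in\{1,\dots,\lfloor 2^{nR}\rfloor\}$, and a (possibly randomized) decoder given by a conditional distribution $G_{Y^n\mid Z^n,J,M}$ with output $Y^n\in\mathcal{X}^n$ (side information available only at the decoder). An $(n,R,R_c)$ E-D-code is the same except that the encoder is $F_{M\mid X^n,Z^n,J}$ (side information at both encoder and decoder). The distribution induced by the code is the joint distribution of $(X^n,Z^n,J,M,Y^n)$ given by $p_{X,Z}^{\otimes n}\cdot p^{\mathcal{U}}_J\cdot F\cdot G$. $\|\cdot\|_{TV}$ denotes total variation distance. *)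

theory Defs
  imports "HOL-Probability.Probability"
begin

abbreviation seqM :: "nat \<Rightarrow> 'a measure \<Rightarrow> (nat \<Rightarrow> 'a) measure" where
  "seqM n M \<equiv> PiM {..<n} (\<lambda>_. M)"

definition code_size :: "nat \<Rightarrow> real \<Rightarrow> nat" where
  "code_size n r = nat \<lfloor>2 powr (real n * r)\<rfloor>"

definition avg_dist :: "('x \<Rightarrow> 'x \<Rightarrow> real) \<Rightarrow> nat \<Rightarrow> (nat \<Rightarrow> 'x) \<Rightarrow> (nat \<Rightarrow> 'x) \<Rightarrow> real" where
  "avg_dist d n x y = (\<Sum>t<n. d (x t) (y t)) / real n"

definition tv_dist :: "'a measure \<Rightarrow> 'a measure \<Rightarrow> real" where
  "tv_dist P Q = (SUP A \<in> sets P. \<bar>measure P A - measure Q A\<bar>)"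

text \<open>The underlying probability space is taken on the
  sample space type 'x \<times> 'x \<times> bool (with an arbitrary sigma-algebra), which is rich
  enough to carry the joint law of any such triple (X, Y, 1_B).\<close>
definition ui_sup :: "('x::topological_space \<Rightarrow> 'x \<Rightarrow> real) \<Rightarrow> 'x measure \<Rightarrow> real \<Rightarrow> ennreal" where
  "ui_sup d pX \<tau> = (SUP (M, X, Y, B) \<in>
      {(M :: ('x \<times> 'x \<times> bool) measure, X, Y, B).
         prob_space M \<and> X \<in> measurable M borel \<and> Y \<in> measurable M borel \<and>
         distr M borel X = pX \<and> distr M borel Y = pX \<and>
         B \<in> sets M \<and> measure M B \<le> \<tau>}.
      \<integral>\<^sup>+ \<omega>. ennreal (d (X \<omega>) (Y \<omega>)) * indicator B \<omega> \<partial>M)"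

definition unif_integrable :: "('x::topological_space \<Rightarrow> 'x \<Rightarrow> real) \<Rightarrow> 'x measure \<Rightarrow> bool" where
  "unif_integrable d pX \<longleftrightarrow> (ui_sup d pX \<longlongrightarrow> 0) (at_right 0)"

text \<open>An (n,R,Rc) E-D-code: encoder F x^n z^n j (a pmf on messages), decoder
  G z^n j m (a probability measure on X^n, measurable in z^n, i.e. a Markov kernel).\<close>
definition is_ED_code ::
  "nat \<Rightarrow> real \<Rightarrow> real \<Rightarrow> ((nat \<Rightarrow> 'x::topological_space) \<Rightarrow> (nat \<Rightarrow> 'z::topological_space) \<Rightarrow> nat \<Rightarrow> nat pmf)
   \<Rightarrow> ((nat \<Rightarrow> 'z) \<Rightarrow> nat \<Rightarrow> nat \<Rightarrow> (nat \<Rightarrow> 'x) measure) \<Rightarrow> bool" where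
  "is_ED_code n R Rc F G \<longleftrightarrow>
     (\<forall>x \<in> space (seqM n borel). \<forall>z \<in> space (seqM n borel). \<forall>j \<in> {1..code_size n Rc}.
        set_pmf (F x z j) \<subseteq> {1..code_size n R}) \<and>
     (\<forall>j \<in> {1..code_size n Rc}. \<forall>m.
        (\<lambda>(x, z). pmf (F x z j) m) \<in> borel_measurable (seqM n borel \<Otimes>\<^sub>M seqM n borel)) \<and>
     (\<forall>j \<in> {1..code_size n Rc}. \<forall>m \<in> {1..code_size n R}.
        (\<lambda>z. G z j m) \<in> measurable (seqM n borel) (prob_algebra (seqM n borel)))"

text \<open>An (n,R,Rc) D-code: an E-D-code whose encoder does not use the side information.\<close>
definition is_D_code ::
  "nat \<Rightarrow> real \<Rightarrow> real \<Rightarrow> ((nat \<Rightarrow> 'x::topological_space) \<Rightarrow> (nat \<Rightarrow> 'z::topological_space) \<Rightarrow> nat \<Rightarrow> nat pmf)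
   \<Rightarrow> ((nat \<Rightarrow> 'z) \<Rightarrow> nat \<Rightarrow> nat \<Rightarrow> (nat \<Rightarrow> 'x) measure) \<Rightarrow> bool" where
  "is_D_code n R Rc F G \<longleftrightarrow> is_ED_code n R Rc F G \<and>
     (\<forall>x z z' j. F x z j = F x z' j)"

definition source_dist :: "nat \<Rightarrow> ('x::topological_space \<times> 'z::topological_space) measure
     \<Rightarrow> ((nat \<Rightarrow> 'x) \<times> (nat \<Rightarrow> 'z)) measure" where
  "source_dist n pXZ = distr (seqM n pXZ) (seqM n borel \<Otimes>\<^sub>M seqM n borel)
     (\<lambda>w. (\<lambda>t\<in>{..<n}. fst (w t), \<lambda>t\<in>{..<n}. snd (w t)))"

definition induced_dist :: "nat \<Rightarrow> real \<Rightarrow> real \<Rightarrow> ('x::topological_space \<times> 'z::topological_space) measure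
     \<Rightarrow> ((nat \<Rightarrow> 'x) \<Rightarrow> (nat \<Rightarrow> 'z) \<Rightarrow> nat \<Rightarrow> nat pmf)
     \<Rightarrow> ((nat \<Rightarrow> 'z) \<Rightarrow> nat \<Rightarrow> nat \<Rightarrow> (nat \<Rightarrow> 'x) measure)
     \<Rightarrow> (((nat \<Rightarrow> 'x) \<times> (nat \<Rightarrow> 'z)) \<times> nat \<times> nat \<times> (nat \<Rightarrow> 'x)) measure" where
  "induced_dist n R Rc pXZ F G =
     source_dist n pXZ \<bind> (\<lambda>(x, z).
       measure_pmf (pmf_of_set {1..code_size n Rc}) \<bind> (\<lambda>j.
       measure_pmf (F x z j) \<bind> (\<lambda>m.
       distr (G z j m)
         ((seqM n borel \<Otimes>\<^sub>M seqM n borel) \<Otimes>\<^sub>M count_space UNIV \<Otimes>\<^sub>M count_space UNIV \<Otimes>\<^sub>M seqM n borel)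
         (\<lambda>y. ((x, z), j, m, y)))))"

definition marg_XY :: "nat \<Rightarrow> (((nat \<Rightarrow> 'x::topological_space) \<times> (nat \<Rightarrow> 'z)) \<times> nat \<times> nat \<times> (nat \<Rightarrow> 'x)) measure
     \<Rightarrow> ((nat \<Rightarrow> 'x) \<times> (nat \<Rightarrow> 'x)) measure" where
  "marg_XY n P = distr P (seqM n borel \<Otimes>\<^sub>M seqM n borel) (\<lambda>((x, z), j, m, y). (x, y))"

definition marg_Y :: "nat \<Rightarrow> (((nat \<Rightarrow> 'x::topological_space) \<times> (nat \<Rightarrow> 'z)) \<times> nat \<times> nat \<times> (nat \<Rightarrow> 'x)) measure
     \<Rightarrow> (nat \<Rightarrow> 'x) measure" where
  "marg_Y n P = distr P (seqM n borel) (\<lambda>((x, z), j, m, y). y)"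

end

theory Submission
  imports Defs
begin

lemma sum_measure_ex:
  assumes "finite_measure \<mu>" "finite_measure \<nu>" "sets \<nu> = sets \<mu>"
  obtains \<rho> where "finite_measure \<rho>" "sets \<rho> = sets \<mu>"
    "\<And>A. A \<in> sets \<mu> \<Longrightarrow> emeasure \<rho> A = emeasure \<mu> A + emeasure \<nu> A"
proof -
  interpret mu: finite_measure \<mu> by fact
  interpret nu: finite_measure \<nu> by fact
  define \<rho> where "\<rho> = measure_of (space \<mu>) (sets \<mu>) (\<lambda>A. emeasure \<mu> A + emeasure \<nu> A)"
  have sa: "sigma_algebra (space \<mu>) (sets \<mu>)" by (rule sets.sigma_algebra_axioms)
  have pos: "positive (sets \<mu>) (\<lambda>A. emeasure \<mu> A + emeasure \<nu> A)"
    by (simp add: positive_def)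
  have ca: "countably_additive (sets \<mu>) (\<lambda>A. emeasure \<mu> A + emeasure \<nu> A)"
    unfolding countably_additive_def
  proof safe
    fix A :: "nat \<Rightarrow> _" assume A: "range A \<subseteq> sets \<mu>" "disjoint_family A"
    then have A': "range A \<subseteq> sets \<nu>" using assms(3) by simp
    have "(\<Sum>i. emeasure \<mu> (A i) + emeasure \<nu> (A i)) = (\<Sum>i. emeasure \<mu> (A i)) + (\<Sum>i. emeasure \<nu> (A i))"
      by (rule suminf_add[symmetric]) auto
    also have "\<dots> = emeasure \<mu> (\<Union>(range A)) + emeasure \<nu> (\<Union>(range A))"
      using suminf_emeasure[OF A] suminf_emeasure[OF A'(1) A(2)] by simp
    finally show "(\<Sum>i. emeasure \<mu> (A i) + emeasure \<nu> (A i)) = emeasure \<mu> (\<Union>(range A)) + emeasure \<nu> (\<Union>(range A))" .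
  qed
  have sets: "sets \<rho> = sets \<mu>" unfolding \<rho>_def
    by (simp add: sets.sets_into_space sets.sigma_sets_eq)
  have em: "emeasure \<rho> A = emeasure \<mu> A + emeasure \<nu> A" if "A \<in> sets \<mu>" for A
    unfolding \<rho>_def by (rule emeasure_measure_of_sigma[OF sa pos ca that])
  have "finite_measure \<rho>"
  proof (rule finite_measureI)
    have "space \<rho> = space \<mu>" unfolding \<rho>_def by simp
    then show "emeasure \<rho> (space \<rho>) \<noteq> \<infinity>"
      using em[OF sets.top] assms(3) sets_eq_imp_space_eq[OF assms(3)]
      by (simp add: finite_measure.emeasure_finite[OF assms(1)] finite_measure.emeasure_finite[OF assms(2)])
  qed
  then show ?thesis using that sets em by blast
qed

lemma real_density_ex:
  assumes "finite_measure \<rho>" "finite_measure \<mu>" "sets \<mu> = sets \<rho>"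
    and ac: "\<And>A. A \<in> sets \<rho> \<Longrightarrow> emeasure \<mu> A \<le> emeasure \<rho> A"
  obtains a where "a \<in> borel_measurable \<rho>" "\<And>x. a x \<ge> 0" "\<mu> = density \<rho> (\<lambda>x. ennreal (a x))"
proof -
  interpret r: finite_measure \<rho> by fact
  interpret m: finite_measure \<mu> by fact
  have "absolutely_continuous \<rho> \<mu>"
    unfolding absolutely_continuous_def
  proof
    fix A assume "A \<in> null_sets \<rho>"
    then have "A \<in> sets \<mu>" "emeasure \<mu> A \<le> 0" using ac[of A] assms(3) by (auto simp: null_sets_def)
    then show "A \<in> null_sets \<mu>" by (auto simp: null_sets_def)
  qed
  from r.Radon_Nikodym[OF this assms(3)] obtain f where f: "f \<in> borel_measurable \<rho>" "density \<rho> f = \<mu>" by blast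
  have "emeasure \<mu> (space \<mu>) = emeasure (density \<rho> f) (space \<rho>)" using f(2) by auto
  also have "\<dots> = (\<integral>\<^sup>+ x. f x * indicator (space \<rho>) x \<partial>\<rho>)"
    using f(1) by (simp add: emeasure_density)
  also have "\<dots> = integral\<^sup>N \<rho> f" by (rule nn_integral_cong) simp
  finally have "integral\<^sup>N \<rho> f = emeasure \<mu> (space \<mu>)" by simp
  then have "integral\<^sup>N \<rho> f \<noteq> \<infinity>" using m.emeasure_finite by simp
  then have ae: "AE x in \<rho>. f x \<noteq> \<infinity>" using nn_integral_PInf_AE[OF f(1)] by simp
  have "density \<rho> (\<lambda>x. ennreal (enn2real (f x))) = density \<rho> f"
    by (rule density_cong) (use f ae in \<open>auto elim!: eventually_mono simp: ennreal_enn2real_if\<close>)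
  with f have "\<mu> = density \<rho> (\<lambda>x. ennreal (enn2real (f x)))" by simp
  moreover have "(\<lambda>x. enn2real (f x)) \<in> borel_measurable \<rho>" using f by measurable
  ultimately show ?thesis using that[of "\<lambda>x. enn2real (f x)"] by simp
qed

lemma common_density_ex:
  assumes "finite_measure \<mu>" "finite_measure \<nu>" "sets \<nu> = sets \<mu>"
  obtains \<rho> a b where "finite_measure \<rho>" "sets \<rho> = sets \<mu>"
    "a \<in> borel_measurable \<rho>" "\<And>x. a x \<ge> 0" "\<mu> = density \<rho> (\<lambda>x. ennreal (a x))"
    "b \<in> borel_measurable \<rho>" "\<And>x. b x \<ge> 0" "\<nu> = density \<rho> (\<lambda>x. ennreal (b x))"
proof -
  obtain \<rho> where r: "finite_measure \<rho>" "sets \<rho> = sets \<mu>"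
    "\<And>A. A \<in> sets \<mu> \<Longrightarrow> emeasure \<rho> A = emeasure \<mu> A + emeasure \<nu> A"
    using sum_measure_ex[OF assms] by blast
  obtain a where a: "a \<in> borel_measurable \<rho>" "\<And>x. a x \<ge> 0" "\<mu> = density \<rho> (\<lambda>x. ennreal (a x))"
    using real_density_ex[OF r(1) assms(1)] r by (metis le_iff_add)
  obtain b where b: "b \<in> borel_measurable \<rho>" "\<And>x. b x \<ge> 0" "\<nu> = density \<rho> (\<lambda>x. ennreal (b x))"
    using real_density_ex[OF r(1) assms(2)] r assms(3) by (metis add.commute le_iff_add)
  show ?thesis using that[OF r(1,2) a b] .
qed

lemma measure_pmf_in_prob_algebra: "measure_pmf p \<in> space (prob_algebra (count_space UNIV))"
  by (simp add: space_prob_algebra measure_pmf.prob_space_axioms)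

lemma emeasure_bernoulli_pmf:
  assumes "0 \<le> p" "p \<le> 1"
  shows "emeasure (measure_pmf (bernoulli_pmf p)) A = indicator A True * ennreal p + indicator A False * ennreal (1 - p)"
proof -
  have "emeasure (measure_pmf (bernoulli_pmf p)) A = (\<integral>\<^sup>+x. indicator A x \<partial>(measure_pmf (bernoulli_pmf p)))"
    by simp
  also have "\<dots> = indicator A True * ennreal p + indicator A False * ennreal (1 - p)"
    using assms by (subst nn_integral_bernoulli_pmf) auto
  finally show ?thesis .
qed

lemma measurable_bernoulli_pmf:
  assumes h: "h \<in> borel_measurable M" and h01: "\<And>x. x \<in> space M \<Longrightarrow> 0 \<le> h x \<and> h x \<le> 1"
  shows "(\<lambda>x. measure_pmf (bernoulli_pmf (h x))) \<in> M \<rightarrow>\<^sub>M prob_algebra (count_space UNIV)"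
proof (rule measurable_prob_algebraI)
  show "(\<lambda>x. measure_pmf (bernoulli_pmf (h x))) \<in> M \<rightarrow>\<^sub>M subprob_algebra (count_space UNIV)"
  proof (rule measurable_subprob_algebra)
    fix a assume "a \<in> space M"
    show "subprob_space (measure_pmf (bernoulli_pmf (h a)))" by (rule prob_space_imp_subprob_space) (rule measure_pmf.prob_space_axioms)
    show "sets (measure_pmf (bernoulli_pmf (h a))) = sets (count_space UNIV)" by simp
  next
    fix A :: "bool set"
    have "(\<lambda>x. indicator A True * ennreal (h x) + indicator A False * ennreal (1 - h x)) \<in> borel_measurable M"
      using h by measurable
    then show "(\<lambda>x. emeasure (measure_pmf (bernoulli_pmf (h x))) A) \<in> borel_measurable M"
      by (rule measurable_cong[THEN iffD1, rotated]) (simp add: emeasure_bernoulli_pmf h01)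
  qed
qed (rule measure_pmf.prob_space_axioms)

lemma tv_coupling:
  assumes Pm: "prob_space \<mu>" and Pn: "prob_space \<nu>" and sets_eq: "sets \<nu> = sets \<mu>"
    and bnd: "\<And>A. A \<in> sets \<mu> \<Longrightarrow> measure \<mu> A \<le> measure \<nu> A + \<tau>"
  obtains g K where "g \<in> borel_measurable \<mu>" "\<And>x. 0 \<le> g x" "\<And>x. g x \<le> 1"
    "(\<integral>\<^sup>+x. ennreal (g x) \<partial>\<mu>) \<le> ennreal \<tau>"
    "\<And>f. f \<in> borel_measurable \<mu> \<Longrightarrow> (\<integral>\<^sup>+x. f x \<partial>\<mu>) \<le> (\<integral>\<^sup>+x. f x \<partial>\<nu>) + (\<integral>\<^sup>+x. f x * ennreal (g x) \<partial>\<mu>)"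
    "K \<in> \<mu> \<rightarrow>\<^sub>M prob_algebra \<mu>" "\<mu> \<bind> K = \<nu>"
    "\<And>y B. y \<in> space \<mu> \<Longrightarrow> B \<in> sets \<mu> \<Longrightarrow> emeasure (K y) B \<le> indicator B y + ennreal (g y)"
proof -
  interpret m: prob_space \<mu> by fact
  interpret n: prob_space \<nu> by fact
  obtain \<rho> a b where r: "finite_measure \<rho>" "sets \<rho> = sets \<mu>"
    and a: "a \<in> borel_measurable \<rho>" "\<And>x. a x \<ge> 0" "\<mu> = density \<rho> (\<lambda>x. ennreal (a x))"
    and b: "b \<in> borel_measurable \<rho>" "\<And>x. b x \<ge> 0" "\<nu> = density \<rho> (\<lambda>x. ennreal (b x))"
    using common_density_ex[OF m.finite_measure_axioms n.finite_measure_axioms sets_eq] by metis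
  have mr: "\<And>N. measurable \<rho> N = measurable \<mu> N" by (rule measurable_cong_sets) (use r in auto)
  have sp: "space \<rho> = space \<mu>" by (rule sets_eq_imp_space_eq) (use r in auto)
  define m where "m x = min (a x) (b x)" for x
  define p where "p x = max 0 (a x - b x)" for x
  define q where "q x = max 0 (b x - a x)" for x
  define g where "g x = p x / a x" for x
  have [measurable]: "m \<in> borel_measurable \<rho>" "p \<in> borel_measurable \<rho>" "q \<in> borel_measurable \<rho>"
      "g \<in> borel_measurable \<rho>" using a b unfolding m_def p_def q_def g_def by measurable
  note ab[measurable] = a(1) b(1)
  have m0: "m x \<ge> 0" "p x \<ge> 0" "q x \<ge> 0" "m x \<le> b x" for x using a(2)[of x] b(2)[of x]
    by (auto simp: m_def p_def q_def)
  have g01: "0 \<le> g x" "g x \<le> 1" for x using a(2)[of x] b(2)[of x]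
    by (auto simp: g_def p_def divide_simps)
  have ag: "a x * g x = p x" for x using a(2)[of x] b(2)[of x]
    by (auto simp: g_def p_def)
  have ag1: "a x * (1 - g x) = m x" for x using a(2)[of x] b(2)[of x]
    by (auto simp: g_def p_def m_def algebra_simps)
  have e1: "ennreal (a x) = ennreal (m x) + ennreal (p x)" for x
  proof -
    have "a x = m x + p x" by (auto simp: m_def p_def)
    then show ?thesis using m0[of x] by (simp add: ennreal_plus)
  qed
  have e2: "ennreal (b x) = ennreal (m x) + ennreal (q x)" for x
  proof -
    have "b x = m x + q x" by (auto simp: m_def q_def)
    then show ?thesis using m0[of x] by (simp add: ennreal_plus)
  qed
  have e3: "ennreal (a x) * ennreal (g x) = ennreal (p x)" for x
    using a(2)[of x] ag[of x] g01[of x] by (metis ennreal_mult)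
  have e4: "ennreal (a x) * ennreal (1 - g x) = ennreal (m x)" for x
    using a(2)[of x] ag1[of x] g01[of x] by (metis diff_ge_0_iff_ge ennreal_mult)
  have intmu: "integral\<^sup>N \<mu> f = (\<integral>\<^sup>+x. ennreal (a x) * f x \<partial>\<rho>)" if "f \<in> borel_measurable \<mu>" for f
  proof -
    have f: "f \<in> borel_measurable \<rho>" using that by (simp add: mr)
    show ?thesis by (subst a(3), rule nn_integral_density) (use f in auto)
  qed
  have intnu: "integral\<^sup>N \<nu> f = (\<integral>\<^sup>+x. ennreal (b x) * f x \<partial>\<rho>)" if "f \<in> borel_measurable \<mu>" for f
  proof -
    have f: "f \<in> borel_measurable \<rho>" using that by (simp add: mr)
    show ?thesis by (subst b(3), rule nn_integral_density) (use f in auto)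
  qed
  have Ia: "(\<integral>\<^sup>+x. ennreal (a x) \<partial>\<rho>) = 1"
    using intmu[of "\<lambda>_. 1"] m.emeasure_space_1 by (simp add: nn_integral_const m.emeasure_space_1)
  have Ib: "(\<integral>\<^sup>+x. ennreal (b x) \<partial>\<rho>) = 1"
    using intnu[of "\<lambda>_. 1"] n.emeasure_space_1 by (simp add: nn_integral_const n.emeasure_space_1)
  have Ia2: "(\<integral>\<^sup>+x. ennreal (a x) \<partial>\<rho>) = (\<integral>\<^sup>+x. ennreal (m x) \<partial>\<rho>) + (\<integral>\<^sup>+x. ennreal (p x) \<partial>\<rho>)"
    by (simp add: e1 nn_integral_add)
  have Ib2: "(\<integral>\<^sup>+x. ennreal (b x) \<partial>\<rho>) = (\<integral>\<^sup>+x. ennreal (m x) \<partial>\<rho>) + (\<integral>\<^sup>+x. ennreal (q x) \<partial>\<rho>)"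
    by (simp add: e2 nn_integral_add)
  have mfin: "(\<integral>\<^sup>+x. ennreal (m x) \<partial>\<rho>) \<noteq> \<infinity>"
  proof
    assume "(\<integral>\<^sup>+x. ennreal (m x) \<partial>\<rho>) = \<infinity>"
    then show False using Ia Ia2 by simp
  qed
  define c where "c = (\<integral>\<^sup>+x. ennreal (q x) \<partial>\<rho>)"
  have pq: "(\<integral>\<^sup>+x. ennreal (p x) \<partial>\<rho>) = c"
  proof -
    have "(\<integral>\<^sup>+x. ennreal (m x) \<partial>\<rho>) + (\<integral>\<^sup>+x. ennreal (p x) \<partial>\<rho>) = (\<integral>\<^sup>+x. ennreal (m x) \<partial>\<rho>) + c"
      using Ia Ia2 Ib Ib2 unfolding c_def by simp
    then show ?thesis using mfin by (simp add: ennreal_add_left_cancel)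
  qed
  have cfin: "c \<noteq> \<infinity>"
  proof
    assume "c = \<infinity>"
    then show False using Ib Ib2 unfolding c_def by simp
  qed
  define A where "A = {x \<in> space \<rho>. b x < a x}"
  have A[measurable]: "A \<in> sets \<rho>" unfolding A_def by measurable
  have c_tau: "c \<le> ennreal \<tau>"
  proof -
    have "c = (\<integral>\<^sup>+x. ennreal (a x) * indicator A x - ennreal (b x) * indicator A x \<partial>\<rho>)"
      unfolding pq[symmetric]
      by (rule nn_integral_cong) (auto simp: A_def p_def ennreal_minus b(2) ennreal_eq_0_iff split: split_indicator)
    also have "\<dots> = (\<integral>\<^sup>+x. ennreal (a x) * indicator A x \<partial>\<rho>) - (\<integral>\<^sup>+x. ennreal (b x) * indicator A x \<partial>\<rho>)"
    proof (rule nn_integral_diff)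
      have "(\<integral>\<^sup>+x. ennreal (b x) * indicator A x \<partial>\<rho>) \<le> (\<integral>\<^sup>+x. ennreal (b x) \<partial>\<rho>)"
        by (rule nn_integral_mono) (simp split: split_indicator)
      then show "(\<integral>\<^sup>+x. ennreal (b x) * indicator A x \<partial>\<rho>) \<noteq> \<infinity>" using Ib by (auto simp: top_unique)
      show "AE x in \<rho>. ennreal (b x) * indicator A x \<le> ennreal (a x) * indicator A x"
        by (rule AE_I2) (auto simp: A_def intro!: ennreal_leI split: split_indicator)
    qed auto
    also have "\<dots> = emeasure \<mu> A - emeasure \<nu> A"
      using A by (simp add: a(3) b(3) emeasure_density)
    also have "\<dots> = ennreal (measure \<mu> A - measure \<nu> A)"
      by (simp add: m.emeasure_eq_measure n.emeasure_eq_measure ennreal_minus)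
    also have "\<dots> \<le> ennreal \<tau>" using bnd[of A] A r(2) by (intro ennreal_leI) auto
    finally show ?thesis .
  qed
  have gmeas: "g \<in> borel_measurable \<mu>" by (subst mr[symmetric]) measurable
  have gint: "(\<integral>\<^sup>+x. ennreal (g x) \<partial>\<mu>) \<le> ennreal \<tau>"
  proof -
    have "(\<integral>\<^sup>+x. ennreal (g x) \<partial>\<mu>) = (\<integral>\<^sup>+x. ennreal (a x) * ennreal (g x) \<partial>\<rho>)"
      by (rule intmu) (use gmeas in measurable)
    also have "\<dots> = c" unfolding e3 by (rule pq)
    finally show ?thesis using c_tau by simp
  qed
  have split: "(\<integral>\<^sup>+x. f x \<partial>\<mu>) \<le> (\<integral>\<^sup>+x. f x \<partial>\<nu>) + (\<integral>\<^sup>+x. f x * ennreal (g x) \<partial>\<mu>)"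
    if f: "f \<in> borel_measurable \<mu>" for f
  proof -
    have f'[measurable]: "f \<in> borel_measurable \<rho>" using f by (simp add: mr)
    have "(\<integral>\<^sup>+x. f x \<partial>\<mu>) = (\<integral>\<^sup>+x. ennreal (m x) * f x + ennreal (a x) * (f x * ennreal (g x)) \<partial>\<rho>)"
      unfolding intmu[OF f]
    proof (rule nn_integral_cong)
      fix x
      have "ennreal (a x) * f x = (ennreal (m x) + ennreal (a x) * ennreal (g x)) * f x"
        by (subst e3, simp only: e1)
      then show "ennreal (a x) * f x = ennreal (m x) * f x + ennreal (a x) * (f x * ennreal (g x))"
        by (simp add: algebra_simps)
    qed
    also have "\<dots> = (\<integral>\<^sup>+x. ennreal (m x) * f x \<partial>\<rho>) + (\<integral>\<^sup>+x. ennreal (a x) * (f x * ennreal (g x)) \<partial>\<rho>)"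
      by (rule nn_integral_add) auto
    also have "\<dots> \<le> (\<integral>\<^sup>+x. ennreal (b x) * f x \<partial>\<rho>) + (\<integral>\<^sup>+x. ennreal (a x) * (f x * ennreal (g x)) \<partial>\<rho>)"
      by (intro add_right_mono nn_integral_mono mult_right_mono ennreal_leI m0) simp
    also have "\<dots> = (\<integral>\<^sup>+x. f x \<partial>\<nu>) + (\<integral>\<^sup>+x. f x * ennreal (g x) \<partial>\<mu>)"
    proof -
      have fg: "(\<lambda>x. f x * ennreal (g x)) \<in> borel_measurable \<mu>" using f gmeas by measurable
      show ?thesis by (simp add: intmu[OF f] intnu[OF f] intmu[OF fg])
    qed
    finally show ?thesis .
  qed
  define cr where "cr = enn2real c"
  define \<nu>r where "\<nu>r = (if c = 0 then \<nu> else density \<rho> (\<lambda>x. ennreal (q x / cr)))"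
  have sets_nur: "sets \<nu>r = sets \<mu>" using sets_eq r(2) by (simp add: \<nu>r_def)
  have c_nur: "c * emeasure \<nu>r B = (\<integral>\<^sup>+x. ennreal (q x) * indicator B x \<partial>\<rho>)" if B: "B \<in> sets \<mu>" for B
  proof (cases "c = 0")
    case True
    have "(\<integral>\<^sup>+x. ennreal (q x) * indicator B x \<partial>\<rho>) \<le> c"
      unfolding c_def by (rule nn_integral_mono) (simp split: split_indicator)
    then show ?thesis using True by simp
  next
    case False
    then have cr: "cr > 0" "c = ennreal cr" using cfin unfolding cr_def
      by (auto simp: enn2real_positive_iff less_top ennreal_enn2real_if zero_less_iff_neq_zero)
    have B': "B \<in> sets \<rho>" using B r(2) by simp
    have "c * emeasure \<nu>r B = ennreal cr * (\<integral>\<^sup>+x. ennreal (q x / cr) * indicator B x \<partial>\<rho>)"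
      using False cr B' by (simp add: \<nu>r_def emeasure_density)
    also have "\<dots> = (\<integral>\<^sup>+x. ennreal cr * (ennreal (q x / cr) * indicator B x) \<partial>\<rho>)"
      by (rule nn_integral_cmult[symmetric]) (use B' in measurable)
    also have "\<dots> = (\<integral>\<^sup>+x. ennreal (q x) * indicator B x \<partial>\<rho>)"
    proof (rule nn_integral_cong)
      fix x
      have "ennreal cr * ennreal (q x / cr) = ennreal (q x)"
        using cr m0[of x] by (simp flip: ennreal_mult)
      then show "ennreal cr * (ennreal (q x / cr) * indicator B x) = ennreal (q x) * indicator B x"
        by (simp add: mult.assoc[symmetric])
    qed
    finally show ?thesis .
  qed
  have prob_nur: "prob_space \<nu>r"
  proof (cases "c = 0")
    case True then show ?thesis by (simp add: \<nu>r_def Pn)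
  next
    case False
    have "c * emeasure \<nu>r (space \<nu>r) = c * 1"
    proof -
      have sp': "space \<nu>r = space \<mu>" using sets_nur by (rule sets_eq_imp_space_eq)
      have "c * emeasure \<nu>r (space \<nu>r) = (\<integral>\<^sup>+x. ennreal (q x) * indicator (space \<mu>) x \<partial>\<rho>)"
        unfolding sp' by (rule c_nur) simp
      also have "\<dots> = c" unfolding c_def by (rule nn_integral_cong) (simp add: sp)
      finally show ?thesis by simp
    qed
    then have "emeasure \<nu>r (space \<nu>r) = 1" using False cfin
      unfolding ennreal_mult_cancel_left by simp
    then show ?thesis by (rule prob_spaceI)
  qed
  have nur_sp: "\<nu>r \<in> space (prob_algebra \<mu>)" using prob_nur sets_nur by (simp add: space_prob_algebra)
  define K where "K y = measure_pmf (bernoulli_pmf (g y)) \<bind> (\<lambda>b. if b then \<nu>r else return \<mu> y)" for y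
  have bern: "(\<lambda>y. measure_pmf (bernoulli_pmf (g y))) \<in> \<mu> \<rightarrow>\<^sub>M prob_algebra (count_space UNIV)"
    by (rule measurable_bernoulli_pmf[OF gmeas]) (simp add: g01)
  have inner: "(\<lambda>(y, b). if b then \<nu>r else return \<mu> y) \<in> \<mu> \<Otimes>\<^sub>M count_space UNIV \<rightarrow>\<^sub>M prob_algebra \<mu>"
  proof -
    have "(\<lambda>p. if snd p then \<nu>r else return \<mu> (fst p)) \<in> \<mu> \<Otimes>\<^sub>M count_space UNIV \<rightarrow>\<^sub>M prob_algebra \<mu>"
      using nur_sp by measurable
    then show ?thesis by (rule measurable_cong[THEN iffD1, rotated]) auto
  qed
  have Kmeas: "K \<in> \<mu> \<rightarrow>\<^sub>M prob_algebra \<mu>"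
    unfolding K_def by (rule measurable_bind_prob_space2[OF bern inner])
  have inner1: "(\<lambda>b. if b then \<nu>r else return \<mu> y) \<in> count_space UNIV \<rightarrow>\<^sub>M prob_algebra \<mu>"
    if y: "y \<in> space \<mu>" for y
  proof -
    have "return \<mu> y \<in> space (prob_algebra \<mu>)" using y by (simp add: space_prob_algebra prob_space_return)
    then show ?thesis using nur_sp unfolding measurable_count_space_eq1 by auto
  qed
  have emK: "emeasure (K y) B = emeasure \<nu>r B * ennreal (g y) + indicator B y * ennreal (1 - g y)"
    if "B \<in> sets \<mu>" "y \<in> space \<mu>" for y B
  proof -
    have "emeasure (K y) B = (\<integral>\<^sup>+b. emeasure (if b then \<nu>r else return \<mu> y) B \<partial>measure_pmf (bernoulli_pmf (g y)))"
      unfolding K_def by (rule emeasure_bind_prob_algebra[OF measure_pmf_in_prob_algebra inner1[OF that(2)] that(1)])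
    also have "\<dots> = emeasure (if True then \<nu>r else return \<mu> y) B * ennreal (g y) + emeasure (if False then \<nu>r else return \<mu> y) B * ennreal (1 - g y)"
      by (rule nn_integral_bernoulli_pmf) (use g01 in auto)
    also have "\<dots> = emeasure \<nu>r B * ennreal (g y) + indicator B y * ennreal (1 - g y)"
      using that by simp
    finally show ?thesis .
  qed
  have Kbnd: "emeasure (K y) B \<le> indicator B y + ennreal (g y)" if "B \<in> sets \<mu>" "y \<in> space \<mu>" for y B
  proof -
    interpret nr: prob_space \<nu>r by (rule prob_nur)
    have "emeasure \<nu>r B * ennreal (g y) \<le> 1 * ennreal (g y)"
      by (intro mult_right_mono) (auto simp: nr.emeasure_le_1)
    moreover have "indicator B y * ennreal (1 - g y) \<le> indicator B y * 1"
      by (intro mult_left_mono) (auto simp: g01)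
    ultimately show ?thesis unfolding emK[OF that] by (metis add.commute add_mono mult_1 mult_1_right)
  qed
  have bindK: "\<mu> \<bind> K = \<nu>"
  proof (rule measure_eqI)
    have "sets (\<mu> \<bind> K) = sets \<mu>"
      by (rule sets_bind[OF sets_kernel[OF measurable_prob_algebraD[OF Kmeas]]]) (use m.not_empty in auto)
    then show sets1: "sets (\<mu> \<bind> K) = sets \<nu>" using sets_eq by simp
    fix B assume "B \<in> sets (\<mu> \<bind> K)"
    then have B: "B \<in> sets \<mu>" using sets1 sets_eq by simp
    then have B'[measurable]: "B \<in> sets \<rho>" using r(2) by simp
    have "emeasure (\<mu> \<bind> K) B = (\<integral>\<^sup>+y. emeasure (K y) B \<partial>\<mu>)"
      by (rule emeasure_bind_prob_algebra[OF _ Kmeas B]) (simp add: space_prob_algebra Pm)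
    also have "\<dots> = (\<integral>\<^sup>+y. emeasure \<nu>r B * ennreal (g y) + indicator B y * ennreal (1 - g y) \<partial>\<mu>)"
      by (rule nn_integral_cong) (rule emK[OF B])
    also have "\<dots> = (\<integral>\<^sup>+y. ennreal (a y) * (emeasure \<nu>r B * ennreal (g y) + indicator B y * ennreal (1 - g y)) \<partial>\<rho>)"
      by (rule intmu) (use gmeas B in measurable)
    also have "\<dots> = (\<integral>\<^sup>+y. emeasure \<nu>r B * ennreal (p y) + ennreal (m y) * indicator B y \<partial>\<rho>)"
      unfolding e3[symmetric] e4[symmetric] by (rule nn_integral_cong) (simp only: algebra_simps)
    also have "\<dots> = emeasure \<nu>r B * (\<integral>\<^sup>+y. ennreal (p y) \<partial>\<rho>) + (\<integral>\<^sup>+y. ennreal (m y) * indicator B y \<partial>\<rho>)"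
      by (subst nn_integral_add) (auto simp: nn_integral_cmult)
    also have "\<dots> = (\<integral>\<^sup>+y. ennreal (q y) * indicator B y \<partial>\<rho>) + (\<integral>\<^sup>+y. ennreal (m y) * indicator B y \<partial>\<rho>)"
      by (simp add: pq c_nur[OF B] mult.commute)
    also have "\<dots> = (\<integral>\<^sup>+y. ennreal (b y) * indicator B y \<partial>\<rho>)"
      by (subst nn_integral_add[symmetric]) (auto intro!: nn_integral_cong simp: e2 distrib_right)
    also have "\<dots> = emeasure \<nu> B" by (simp add: b(3) emeasure_density)
    finally show "emeasure (\<mu> \<bind> K) B = emeasure \<nu> B" .
  qed
  show ?thesis
  proof (rule that[of g K])
    show "g \<in> borel_measurable \<mu>" by (rule gmeas)
    show "0 \<le> g x" "g x \<le> 1" for x by (rule g01)+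
    show "(\<integral>\<^sup>+x. ennreal (g x) \<partial>\<mu>) \<le> ennreal \<tau>" by (rule gint)
    show "(\<integral>\<^sup>+x. f x \<partial>\<mu>) \<le> (\<integral>\<^sup>+x. f x \<partial>\<nu>) + (\<integral>\<^sup>+x. f x * ennreal (g x) \<partial>\<mu>)"
      if "f \<in> borel_measurable \<mu>" for f using that by (rule split)
    show "K \<in> \<mu> \<rightarrow>\<^sub>M prob_algebra \<mu>" by (rule Kmeas)
    show "\<mu> \<bind> K = \<nu>" by (rule bindK)
    show "emeasure (K y) B \<le> indicator B y + ennreal (g y)" if "y \<in> space \<mu>" "B \<in> sets \<mu>" for y B
      using that(2,1) by (rule Kbnd)
  qed
qed


lemma fst_borel: "fst \<in> borel \<rightarrow>\<^sub>M (borel :: 'a::topological_space measure)"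
  by (rule borel_measurable_continuous_onI) (intro continuous_intros)

lemma snd_borel: "snd \<in> borel \<rightarrow>\<^sub>M (borel :: 'a::topological_space measure)"
  by (rule borel_measurable_continuous_onI) (intro continuous_intros)

lemma bind_pmf_cong_sets:
  assumes "\<And>m. sets (f m) = sets N" "\<And>m. sets (g m) = sets N" "\<And>m. m \<in> set_pmf p \<Longrightarrow> f m = g m"
  shows "measure_pmf p \<bind> f = measure_pmf p \<bind> g"
proof -
  have s: "subprob_algebra (f x) = subprob_algebra (g y)" for x y
    by (rule subprob_algebra_cong) (simp add: assms)
  have e: "emeasure (measure_pmf p) (f -` A \<inter> space (measure_pmf p)) = emeasure (measure_pmf p) (g -` A \<inter> space (measure_pmf p))" for A
    by (rule emeasure_eq_AE) (auto simp: AE_measure_pmf_iff assms(3))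
  have d: "distr (measure_pmf p) X f = distr (measure_pmf p) X g" for X
    unfolding distr_def e ..
  show ?thesis unfolding bind_def d by (simp add: s[of "SOME x. True" "SOME x. True"])
qed

lemma pmf_kernel_meas:
  assumes "\<And>m. (\<lambda>w. pmf (P w) m) \<in> borel_measurable M"
  shows "(\<lambda>w. measure_pmf (P w :: nat pmf)) \<in> M \<rightarrow>\<^sub>M prob_algebra (count_space UNIV)"
proof (rule measurable_prob_algebraI)
  show "(\<lambda>w. measure_pmf (P w)) \<in> M \<rightarrow>\<^sub>M subprob_algebra (count_space UNIV)"
  proof (rule measurable_subprob_algebra)
    fix a assume "a \<in> space M"
    show "subprob_space (measure_pmf (P a))" by (rule prob_space_imp_subprob_space) (rule measure_pmf.prob_space_axioms)
    show "sets (measure_pmf (P a)) = sets (count_space UNIV)" by simp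
  next
    fix A :: "nat set"
    have "(\<lambda>w. \<Sum>i. ennreal (pmf (P w) i) * indicator A i) \<in> borel_measurable M"
      using assms by measurable
    moreover have "emeasure (measure_pmf (P w)) A = (\<Sum>i. ennreal (pmf (P w) i) * indicator A i)" for w
    proof -
      have "emeasure (measure_pmf (P w)) A = (\<integral>\<^sup>+x. indicator A x \<partial>measure_pmf (P w))" by simp
      also have "\<dots> = (\<Sum>i. ennreal (pmf (P w) i) * indicator A i)"
        by (simp add: nn_integral_measure_pmf nn_integral_count_space_nat)
      finally show ?thesis .
    qed
    ultimately show "(\<lambda>w. emeasure (measure_pmf (P w)) A) \<in> borel_measurable M" by simp
  qed
qed (rule measure_pmf.prob_space_axioms)

lemma measurable_pair_nat2:
  assumes "\<And>i. (\<lambda>x. f (x, i)) \<in> M \<rightarrow>\<^sub>M N"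
  shows "f \<in> M \<Otimes>\<^sub>M count_space (UNIV :: nat set) \<rightarrow>\<^sub>M N"
proof -
  have "(\<lambda>p. (\<lambda>i p. f (fst p, i)) (snd p) p) \<in> M \<Otimes>\<^sub>M count_space (UNIV :: nat set) \<rightarrow>\<^sub>M N"
    by (rule measurable_compose_countable) (use assms in \<open>auto intro: measurable_compose[OF measurable_fst]\<close>)
  then show ?thesis by simp
qed

lemma code_size_ge1: "r \<ge> 0 \<Longrightarrow> code_size n r \<ge> 1"
proof -
  assume r: "r \<ge> 0"
  have "1 \<le> 2 powr (real n * r)" by (rule ge_one_powr_ge_zero) (use r in auto)
  then have "1 \<le> \<lfloor>2 powr (real n * r)\<rfloor>" by (simp add: one_le_floor)
  then show ?thesis unfolding code_size_def by (subst le_nat_iff) auto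
qed

locale code_setup =
  fixes n :: nat and R Rc :: real
    and pXZ :: "('x::polish_space \<times> 'z::polish_space) measure"
    and F :: "(nat \<Rightarrow> 'x) \<Rightarrow> (nat \<Rightarrow> 'z) \<Rightarrow> nat \<Rightarrow> nat pmf"
    and G :: "(nat \<Rightarrow> 'z) \<Rightarrow> nat \<Rightarrow> nat \<Rightarrow> (nat \<Rightarrow> 'x) measure"
  assumes src: "prob_space pXZ" "sets pXZ = sets borel"
    and code: "is_ED_code n R Rc F G"
    and Rc: "Rc \<ge> 0"
begin

abbreviation "SX \<equiv> seqM n (borel :: 'x measure)"
abbreviation "SZ \<equiv> seqM n (borel :: 'z measure)"
abbreviation "SXZ \<equiv> SX \<Otimes>\<^sub>M SZ"
abbreviation "Big \<equiv> SXZ \<Otimes>\<^sub>M count_space UNIV \<Otimes>\<^sub>M count_space UNIV \<Otimes>\<^sub>M SX"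
abbreviation "JJ \<equiv> {1..code_size n Rc}"
abbreviation "MM \<equiv> {1..code_size n R}"

definition "U = measure_pmf (pmf_of_set JJ)"
definition "F0 x z j = (if j \<in> JJ then F x z j else return_pmf 1)"
definition "y0 = (\<lambda>t\<in>{..<n}. undefined :: 'x)"
definition "G0 z j m = (if j \<in> JJ \<and> m \<in> MM \<and> z \<in> space SZ then G z j m else return SX y0)"
definition "nice H \<longleftrightarrow> (\<forall>z j m. H z j m \<in> space (prob_algebra SX)) \<and> (\<forall>j m. (\<lambda>z. H z j m) \<in> SZ \<rightarrow>\<^sub>M prob_algebra SX)"
definition "Phi H w = U \<bind> (\<lambda>j. measure_pmf (F0 (fst w) (snd w) j) \<bind> (\<lambda>m. distr (H (snd w) j m) Big (\<lambda>y. (w, j, m, y))))"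

lemma JJ_ne: "JJ \<noteq> {}" using code_size_ge1[OF Rc, of n] by auto

lemma set_U: "set_pmf (pmf_of_set JJ) = JJ" using JJ_ne by simp

lemma U_sp: "U \<in> space (prob_algebra (count_space UNIV))"
  unfolding U_def by (rule measure_pmf_in_prob_algebra)

lemma F_supp: "x \<in> space SX \<Longrightarrow> z \<in> space SZ \<Longrightarrow> j \<in> JJ \<Longrightarrow> set_pmf (F x z j) \<subseteq> MM"
  using code unfolding is_ED_code_def by blast

lemma F_meas: "j \<in> JJ \<Longrightarrow> (\<lambda>(x, z). pmf (F x z j) m) \<in> borel_measurable SXZ"
  using code unfolding is_ED_code_def by blast

lemma G_meas: "j \<in> JJ \<Longrightarrow> m \<in> MM \<Longrightarrow> (\<lambda>z. G z j m) \<in> SZ \<rightarrow>\<^sub>M prob_algebra SX"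
  using code unfolding is_ED_code_def by blast

lemma y0_sp: "y0 \<in> space SX" unfolding y0_def by (simp add: space_PiM)

lemma return_y0: "return SX y0 \<in> space (prob_algebra SX)"
  using y0_sp by (simp add: space_prob_algebra prob_space_return)

lemma G0_nice: "nice G0"
  unfolding nice_def
proof safe
  fix z j m show "G0 z j m \<in> space (prob_algebra SX)"
    using return_y0 measurable_space[OF G_meas, of j m z] by (auto simp: G0_def)
next
  fix j m show "(\<lambda>z. G0 z j m) \<in> SZ \<rightarrow>\<^sub>M prob_algebra SX"
  proof (cases "j \<in> JJ \<and> m \<in> MM")
    case True
    then show ?thesis using G_meas[of j m]
      by (rule_tac measurable_cong[THEN iffD2]) (auto simp: G0_def)
  next
    case False
    then have "(\<lambda>z. G0 z j m) = (\<lambda>z. return SX y0)" by (auto simp: G0_def)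
    then show ?thesis using return_y0 by simp
  qed
qed

lemma F0_meas: "(\<lambda>w. measure_pmf (F0 (fst w) (snd w) j)) \<in> SXZ \<rightarrow>\<^sub>M prob_algebra (count_space UNIV)"
proof (cases "j \<in> JJ")
  case True
  show ?thesis
  proof (rule pmf_kernel_meas)
    fix m
    have "(\<lambda>(x, z). pmf (F x z j) m) \<in> borel_measurable SXZ" by (rule F_meas[OF True])
    then show "(\<lambda>w. pmf (F0 (fst w) (snd w) j) m) \<in> borel_measurable SXZ"
      using True by (simp add: F0_def split_beta')
  qed
next
  case False
  then have "(\<lambda>w. measure_pmf (F0 (fst w) (snd w) j)) = (\<lambda>w. measure_pmf (return_pmf 1))"
    by (auto simp: F0_def)
  then show ?thesis by (rule ssubst) (rule measurable_const[OF measure_pmf_in_prob_algebra])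
qed

lemma Phi_meas:
  assumes H: "nice H"
  shows "Phi H \<in> SXZ \<rightarrow>\<^sub>M prob_algebra Big"
proof -
  have D: "(\<lambda>w. distr (H (snd w) j m) Big (\<lambda>y. (w, j, m, y))) \<in> SXZ \<rightarrow>\<^sub>M prob_algebra Big" for j m
  proof (rule measurable_distr_prob_space2)
    show "(\<lambda>w. H (snd w) j m) \<in> SXZ \<rightarrow>\<^sub>M prob_algebra SX"
      using H unfolding nice_def by (auto intro: measurable_compose[OF measurable_snd])
    show "(\<lambda>(w, y). (w, j, m, y)) \<in> SXZ \<Otimes>\<^sub>M SX \<rightarrow>\<^sub>M Big" by measurable
  qed
  have Hj: "(\<lambda>w. measure_pmf (F0 (fst w) (snd w) j) \<bind> (\<lambda>m. distr (H (snd w) j m) Big (\<lambda>y. (w, j, m, y))))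
     \<in> SXZ \<rightarrow>\<^sub>M prob_algebra Big" for j
  proof (rule measurable_bind_prob_space2[OF F0_meas])
    show "(\<lambda>(w, m). distr (H (snd w) j m) Big (\<lambda>y. (w, j, m, y))) \<in> SXZ \<Otimes>\<^sub>M count_space UNIV \<rightarrow>\<^sub>M prob_algebra Big"
      by (rule measurable_pair_nat2) (simp add: D)
  qed
  show ?thesis unfolding Phi_def
  proof (rule measurable_bind_prob_space2[OF measurable_const[OF U_sp]])
    show "(\<lambda>(w, j). measure_pmf (F0 (fst w) (snd w) j) \<bind> (\<lambda>m. distr (H (snd w) j m) Big (\<lambda>y. (w, j, m, y))))
        \<in> SXZ \<Otimes>\<^sub>M count_space UNIV \<rightarrow>\<^sub>M prob_algebra Big"
      by (rule measurable_pair_nat2) (simp add: Hj)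
  qed
qed


lemma emb_meas: "w \<in> space SXZ \<Longrightarrow> (\<lambda>y. (w, j, m, y)) \<in> SX \<rightarrow>\<^sub>M Big"
  by measurable

lemma in_prob_algebra_bind:
  assumes "A \<in> space (prob_algebra M)" "K \<in> M \<rightarrow>\<^sub>M prob_algebra N"
  shows "A \<bind> K \<in> space (prob_algebra N)"
proof -
  have "(\<lambda>_::unit. A \<bind> K) \<in> count_space UNIV \<rightarrow>\<^sub>M prob_algebra N"
    by (rule measurable_bind_prob_space[OF measurable_const[OF assms(1)] assms(2)])
  from measurable_space[OF this, of "()"] show ?thesis by simp
qed

lemma in_prob_algebra_distr:
  assumes "A \<in> space (prob_algebra M)" "f \<in> M \<rightarrow>\<^sub>M N"
  shows "distr A N f \<in> space (prob_algebra N)"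
  using assms by (auto simp: space_prob_algebra intro!: prob_space.prob_space_distr cong: measurable_cong_sets)

lemma pmf_bind_sp:
  assumes "\<And>m. X m \<in> space (prob_algebra N)"
  shows "measure_pmf p \<bind> X \<in> space (prob_algebra N)"
  by (rule in_prob_algebra_bind[OF measure_pmf_in_prob_algebra]) (use assms in \<open>simp add: measurable_count_space_eq1\<close>)

lemma D_sp: "nice H \<Longrightarrow> w \<in> space SXZ \<Longrightarrow> distr (H z j m) Big (\<lambda>y. (w, j, m, y)) \<in> space (prob_algebra Big)"
  unfolding nice_def by (intro in_prob_algebra_distr emb_meas) auto

lemma A_sp: "nice H \<Longrightarrow> w \<in> space SXZ \<Longrightarrow>
   measure_pmf p \<bind> (\<lambda>m. distr (H z j m) Big (\<lambda>y. (w, j, m, y))) \<in> space (prob_algebra Big)"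
  by (intro pmf_bind_sp D_sp)

lemma sp_sub: "A \<in> space (prob_algebra N) \<Longrightarrow> A \<in> space (subprob_algebra N)"
  by (auto simp: space_prob_algebra space_subprob_algebra prob_space_imp_subprob_space)

lemma source_map_meas: "(\<lambda>w. (\<lambda>t\<in>{..<n}. fst (w t), \<lambda>t\<in>{..<n}. snd (w t))) \<in> seqM n pXZ \<rightarrow>\<^sub>M SXZ"
proof -
  have "(\<lambda>w. (\<lambda>t\<in>{..<n}. fst (w t), \<lambda>t\<in>{..<n}. snd (w t))) \<in> seqM n (borel :: ('x \<times> 'z) measure) \<rightarrow>\<^sub>M SXZ"
    using fst_borel snd_borel by measurable
  moreover have "sets (seqM n pXZ) = sets (seqM n (borel :: ('x \<times> 'z) measure))"
    by (rule sets_PiM_cong) (auto simp: src)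
  ultimately show ?thesis by (simp cong: measurable_cong_sets)
qed

lemma prob_seq_pXZ: "prob_space (seqM n pXZ)"
  by (rule prob_space_PiM) (simp add: src)

lemma source_prob: "prob_space (source_dist n pXZ)"
  unfolding source_dist_def by (rule prob_space.prob_space_distr[OF prob_seq_pXZ source_map_meas])

lemma source_sets: "sets (source_dist n pXZ) = sets SXZ"
  unfolding source_dist_def by simp

lemma source_space: "space (source_dist n pXZ) = space SXZ"
  unfolding source_dist_def by simp

lemma pX_meas: "fst \<in> pXZ \<rightarrow>\<^sub>M borel"
  using fst_borel by (simp add: src cong: measurable_cong_sets)

lemma pX_prob: "prob_space (distr pXZ borel fst)"
  by (rule prob_space.prob_space_distr[OF src(1) pX_meas])

lemma source_X: "distr (source_dist n pXZ) SX fst = seqM n (distr pXZ borel fst)"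
proof -
  let ?pX = "distr pXZ borel fst"
  have "distr (source_dist n pXZ) SX fst = distr (seqM n pXZ) SX (fst \<circ> (\<lambda>w. (\<lambda>t\<in>{..<n}. fst (w t), \<lambda>t\<in>{..<n}. snd (w t))))"
    unfolding source_dist_def by (rule distr_distr[OF _ source_map_meas]) simp
  also have "\<dots> = distr (seqM n pXZ) (seqM n ?pX) (compose {..<n} fst)"
  proof (rule distr_cong)
    show "sets SX = sets (seqM n ?pX)" by (rule sets_PiM_cong) simp_all
    show "(fst \<circ> (\<lambda>w. (\<lambda>t\<in>{..<n}. fst (w t), \<lambda>t\<in>{..<n}. snd (w t)))) x = compose {..<n} fst x" for x
      by (simp add: compose_def)
  qed simp
  also have "\<dots> = seqM n (distr pXZ ?pX fst)"
  proof (rule distr_PiM_finite_prob_space')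
    have "sets ?pX = sets borel" by simp
    then show "fst \<in> pXZ \<rightarrow>\<^sub>M ?pX" if "i \<in> {..<n}" for i
      using pX_meas by (simp cong: measurable_cong_sets)
  qed (simp_all add: src pX_prob)
  also have "\<dots> = seqM n ?pX"
  proof (rule PiM_cong)
    show "distr pXZ ?pX fst = ?pX" for i by (rule distr_cong) simp_all
  qed simp
  finally show ?thesis .
qed

lemma induced_eq:
  assumes H: "nice H" and agree: "\<And>z j m. z \<in> space SZ \<Longrightarrow> j \<in> JJ \<Longrightarrow> m \<in> MM \<Longrightarrow> D z j m = H z j m"
  shows "induced_dist n R Rc pXZ F D = source_dist n pXZ \<bind> Phi H"
  unfolding induced_dist_def
proof (rule bind_cong[OF refl])
  fix w assume "w \<in> space (source_dist n pXZ)"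
  then obtain x z where w: "w = (x, z)" "x \<in> space SX" "z \<in> space SZ"
    by (auto simp: source_space space_pair_measure)
  have "measure_pmf (pmf_of_set JJ) \<bind> (\<lambda>j. measure_pmf (F x z j) \<bind> (\<lambda>m. distr (D z j m) Big (\<lambda>y. ((x, z), j, m, y))))
      = measure_pmf (pmf_of_set JJ) \<bind> (\<lambda>j. measure_pmf (F0 x z j) \<bind> (\<lambda>m. distr (H z j m) Big (\<lambda>y. ((x, z), j, m, y))))"
  proof (rule bind_pmf_cong_sets[where N = Big])
    fix j assume j: "j \<in> set_pmf (pmf_of_set JJ)"
    then have j': "j \<in> JJ" using set_U by simp
    show "measure_pmf (F x z j) \<bind> (\<lambda>m. distr (D z j m) Big (\<lambda>y. ((x, z), j, m, y)))
        = measure_pmf (F0 x z j) \<bind> (\<lambda>m. distr (H z j m) Big (\<lambda>y. ((x, z), j, m, y)))"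
    proof -
      have "F0 x z j = F x z j" using j' by (simp add: F0_def)
      moreover have "measure_pmf (F x z j) \<bind> (\<lambda>m. distr (D z j m) Big (\<lambda>y. ((x, z), j, m, y)))
        = measure_pmf (F x z j) \<bind> (\<lambda>m. distr (H z j m) Big (\<lambda>y. ((x, z), j, m, y)))"
      proof (rule bind_pmf_cong_sets[where N = Big])
        fix m assume "m \<in> set_pmf (F x z j)"
        then have "m \<in> MM" using F_supp[OF w(2,3) j'] by auto
        then show "distr (D z j m) Big (\<lambda>y. ((x, z), j, m, y)) = distr (H z j m) Big (\<lambda>y. ((x, z), j, m, y))"
          using agree[OF w(3) j'] by simp
      qed auto
      ultimately show ?thesis by simp
    qed
  qed (auto intro!: sets_bind)
  then show "(case w of (x, z) \<Rightarrow> measure_pmf (pmf_of_set JJ) \<bind> (\<lambda>j. measure_pmf (F x z j) \<bind> (\<lambda>m. distr (D z j m) Big (\<lambda>y. ((x, z), j, m, y)))))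
      = Phi H w"
    by (simp add: w Phi_def U_def)
qed

definition "T K p = distr (K (snd (snd (snd p)))) Big (\<lambda>y'. (fst p, fst (snd p), fst (snd (snd p)), y'))"

lemma T_meas:
  assumes K: "K \<in> SX \<rightarrow>\<^sub>M prob_algebra SX"
  shows "T K \<in> Big \<rightarrow>\<^sub>M prob_algebra Big"
  unfolding T_def
proof (rule measurable_distr_prob_space2)
  show "(\<lambda>p. K (snd (snd (snd p)))) \<in> Big \<rightarrow>\<^sub>M prob_algebra SX"
    by (rule measurable_compose[OF _ K]) measurable
  show "(\<lambda>(p, y'). (fst p, fst (snd p), fst (snd (snd p)), y')) \<in> Big \<Otimes>\<^sub>M SX \<rightarrow>\<^sub>M Big"
    by measurable
qed

lemma nice_bind:
  assumes H: "nice H" and K: "K \<in> SX \<rightarrow>\<^sub>M prob_algebra SX"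
  shows "nice (\<lambda>z j m. H z j m \<bind> K)"
  using H unfolding nice_def
  by (auto intro: in_prob_algebra_bind[OF _ K] measurable_bind_prob_space[OF _ K])

lemma Phi_bind:
  assumes H: "nice H" and K: "K \<in> SX \<rightarrow>\<^sub>M prob_algebra SX" and w: "w \<in> space SXZ"
  shows "Phi (\<lambda>z j m. H z j m \<bind> K) w = Phi H w \<bind> T K"
proof -
  note TS = measurable_prob_algebraD[OF T_meas[OF K]]
  have Hsp: "H z j m \<in> space (prob_algebra SX)" for z j m using H by (simp add: nice_def)
  have Hs: "sets (H z j m) = sets SX" for z j m using Hsp[of z j m] by (simp add: space_prob_algebra)
  have Hne: "space (H z j m) \<noteq> {}" for z j m
    using Hsp[of z j m] by (auto simp: space_prob_algebra prob_space.not_empty)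
  have KH: "K \<in> H z j m \<rightarrow>\<^sub>M subprob_algebra SX" for z j m
    using measurable_prob_algebraD[OF K] Hs by (simp cong: measurable_cong_sets)
  have inner: "distr (H z j m \<bind> K) Big (\<lambda>y. (w, j, m, y)) = distr (H z j m) Big (\<lambda>y. (w, j, m, y)) \<bind> T K" for z j m
  proof -
    have "distr (H z j m \<bind> K) Big (\<lambda>y. (w, j, m, y)) = H z j m \<bind> (\<lambda>y. distr (K y) Big (\<lambda>y'. (w, j, m, y')))"
      by (rule distr_bind[OF KH Hne emb_meas[OF w]])
    also have "\<dots> = H z j m \<bind> (\<lambda>y. T K (w, j, m, y))" by (simp add: T_def)
    also have "\<dots> = distr (H z j m) Big (\<lambda>y. (w, j, m, y)) \<bind> T K"
      by (rule bind_distr[symmetric]) (use emb_meas[OF w] Hs TS Hne in \<open>auto cong: measurable_cong_sets\<close>)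
    finally show ?thesis .
  qed
  have mid: "measure_pmf p \<bind> (\<lambda>m. distr (H z j m \<bind> K) Big (\<lambda>y. (w, j, m, y)))
      = (measure_pmf p \<bind> (\<lambda>m. distr (H z j m) Big (\<lambda>y. (w, j, m, y)))) \<bind> T K" for p z j
  proof -
    have "(measure_pmf p \<bind> (\<lambda>m. distr (H z j m) Big (\<lambda>y. (w, j, m, y)))) \<bind> T K
        = measure_pmf p \<bind> (\<lambda>m. distr (H z j m) Big (\<lambda>y. (w, j, m, y)) \<bind> T K)"
      by (rule bind_assoc[OF _ TS]) (auto intro!: sp_sub D_sp[OF H w])
    then show ?thesis by (simp add: inner)
  qed
  have "Phi H w \<bind> T K = U \<bind> (\<lambda>j. (measure_pmf (F0 (fst w) (snd w) j) \<bind> (\<lambda>m. distr (H (snd w) j m) Big (\<lambda>y. (w, j, m, y)))) \<bind> T K)"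
    unfolding Phi_def U_def
    by (rule bind_assoc[OF _ TS]) (auto intro!: sp_sub A_sp[OF H w])
  also have "\<dots> = Phi (\<lambda>z j m. H z j m \<bind> K) w"
    unfolding Phi_def by (simp add: mid)
  finally show ?thesis by simp
qed

lemma Phi_x:
  assumes H: "nice H" and w: "w \<in> space SXZ"
  shows "distr (Phi H w) SX (\<lambda>p. fst (fst p)) = return SX (fst w)"
proof -
  have fm: "(\<lambda>p. fst (fst p)) \<in> Big \<rightarrow>\<^sub>M SX" by measurable
  have fw: "fst w \<in> space SX" using w by (auto simp: space_pair_measure)
  have Hsp: "H z j m \<in> space (prob_algebra SX)" for z j m using H by (simp add: nice_def)
  have d: "distr (distr (H z j m) Big (\<lambda>y. (w, j, m, y))) SX (\<lambda>p. fst (fst p)) = return SX (fst w)" for z j m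
  proof -
    have "distr (distr (H z j m) Big (\<lambda>y. (w, j, m, y))) SX (\<lambda>p. fst (fst p)) = distr (H z j m) SX (\<lambda>_. fst w)"
      using Hsp[of z j m] emb_meas[OF w] fm
      by (subst distr_distr) (auto simp: space_prob_algebra comp_def cong: measurable_cong_sets)
    also have "\<dots> = return SX (fst w)"
      using Hsp[of z j m] fw by (simp add: space_prob_algebra prob_space.distr_const)
    finally show ?thesis .
  qed
  have pm: "measure_pmf p \<bind> (\<lambda>_. return SX (fst w)) = return SX (fst w)" for p :: "nat pmf"
    by (rule bind_const') (auto intro!: prob_space_imp_subprob_space prob_space_return fw simp: measure_pmf.prob_space_axioms)
  have A: "distr (measure_pmf p \<bind> (\<lambda>m. distr (H z j m) Big (\<lambda>y. (w, j, m, y)))) SX (\<lambda>p. fst (fst p)) = return SX (fst w)" for p z j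
  proof -
    have "distr (measure_pmf p \<bind> (\<lambda>m. distr (H z j m) Big (\<lambda>y. (w, j, m, y)))) SX (\<lambda>p. fst (fst p))
       = measure_pmf p \<bind> (\<lambda>m. distr (distr (H z j m) Big (\<lambda>y. (w, j, m, y))) SX (\<lambda>p. fst (fst p)))"
      by (rule distr_bind[OF _ _ fm]) (auto intro!: sp_sub D_sp[OF H w])
    also have "\<dots> = return SX (fst w)" by (simp add: d pm)
    finally show ?thesis .
  qed
  have "distr (Phi H w) SX (\<lambda>p. fst (fst p)) = U \<bind> (\<lambda>j. distr (measure_pmf (F0 (fst w) (snd w) j) \<bind> (\<lambda>m. distr (H (snd w) j m) Big (\<lambda>y. (w, j, m, y)))) SX (\<lambda>p. fst (fst p)))"
    unfolding Phi_def U_def by (rule distr_bind[OF _ _ fm]) (auto intro!: sp_sub A_sp[OF H w])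
  also have "\<dots> = return SX (fst w)" unfolding U_def by (simp add: A pm)
  finally show ?thesis .
qed

end


lemma prob_algebra_cong:
  assumes h: "sets M = sets N" shows "prob_algebra M = prob_algebra N"
proof -
  have "subprob_algebra M = subprob_algebra N" by (rule subprob_algebra_cong[OF h])
  then show ?thesis by (simp add: prob_algebra_def)
qed

lemma tv_le:
  assumes "tv_dist P Q \<le> e" "finite_measure P" "finite_measure Q" "A \<in> sets P"
  shows "\<bar>measure P A - measure Q A\<bar> \<le> e"
proof -
  have "bdd_above ((\<lambda>A. \<bar>measure P A - measure Q A\<bar>) ` sets P)"
  proof (rule bdd_aboveI2)
    fix A
    have "\<bar>measure P A - measure Q A\<bar> \<le> measure P A + measure Q A" by (simp add: abs_le_iff)
    also have "\<dots> \<le> measure P (space P) + measure Q (space Q)"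
      using assms(2,3) by (intro add_mono finite_measure.bounded_measure)
    finally show "\<bar>measure P A - measure Q A\<bar> \<le> measure P (space P) + measure Q (space Q)" .
  qed
  then have "\<bar>measure P A - measure Q A\<bar> \<le> tv_dist P Q"
    unfolding tv_dist_def by (rule cSUP_upper[OF assms(4)])
  then show ?thesis using assms(1) by simp
qed

lemma marg_snd_measure:
  assumes "finite_measure M" "sets M = sets (A \<Otimes>\<^sub>M B)" "S \<in> sets B"
  shows "measure (distr M B snd) S = measure M (space A \<times> S)"
proof -
  have sp: "space M = space (A \<Otimes>\<^sub>M B)" using assms(2) by (rule sets_eq_imp_space_eq)
  have "measure (distr M B snd) S = measure M (snd -` S \<inter> space M)"
  proof (rule measure_distr)
    show "snd \<in> M \<rightarrow>\<^sub>M B" using measurable_cong_sets[OF assms(2) refl, of B] by simp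
  qed (rule assms(3))
  also have "snd -` S \<inter> space M = space A \<times> S"
    using sets.sets_into_space[OF assms(3)] by (auto simp: sp space_pair_measure)
  finally show ?thesis .
qed

lemma marg_XY_alt: "marg_XY n P = distr P (seqM n borel \<Otimes>\<^sub>M seqM n borel) (\<lambda>p. (fst (fst p), snd (snd (snd p))))"
  unfolding marg_XY_def by (rule arg_cong[where f = "distr _ _"]) (auto simp: fun_eq_iff split_beta')

lemma marg_Y_alt: "marg_Y n P = distr P (seqM n borel) (\<lambda>p. snd (snd (snd p)))"
  unfolding marg_Y_def by (rule arg_cong[where f = "distr _ _"]) (auto simp: fun_eq_iff split_beta')

theorem mainTheorem1:
  fixes n :: nat and \<Delta> \<epsilon>1 \<epsilon>2 \<epsilon>3 R Rc :: real
    and pXZ :: "('x::polish_space \<times> 'z::polish_space) measure"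
    and d :: "'x \<Rightarrow> 'x \<Rightarrow> real"
    and Q :: "((nat \<Rightarrow> 'x) \<times> (nat \<Rightarrow> 'x)) measure"
    and F :: "(nat \<Rightarrow> 'x) \<Rightarrow> (nat \<Rightarrow> 'z) \<Rightarrow> nat \<Rightarrow> nat pmf"
    and G :: "(nat \<Rightarrow> 'z) \<Rightarrow> nat \<Rightarrow> nat \<Rightarrow> (nat \<Rightarrow> 'x) measure"
  defines "pX \<equiv> distr pXZ borel fst"
  assumes n_pos: "n > 0"
    and Delta: "\<Delta> \<ge> 0" and eps: "\<epsilon>1 > 0" "\<epsilon>2 > 0" "\<epsilon>3 > 0"
    and src: "prob_space pXZ" "sets pXZ = sets borel"
    and d_nonneg: "\<And>x y. d x y \<ge> 0"
    and d_meas: "(\<lambda>(x, y). d x y) \<in> borel_measurable (borel \<Otimes>\<^sub>M borel)"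
    and UI: "unif_integrable d pX"
    and Q: "prob_space Q" "sets Q = sets (seqM n borel \<Otimes>\<^sub>M seqM n borel)"
    and Q_dist: "(\<integral>\<^sup>+ (x, y). ennreal (avg_dist d n x y) \<partial>Q) \<le> ennreal (\<Delta> + \<epsilon>1)"
    and Q_tv: "tv_dist (distr Q (seqM n borel) snd) (seqM n pX) \<le> \<epsilon>2"
    and rates: "R \<ge> 0" "Rc \<ge> 0"
    and code: "is_ED_code n R Rc F G"
    and P1_tv: "tv_dist (marg_XY n (induced_dist n R Rc pXZ F G)) Q \<le> \<epsilon>3"
  shows "\<exists>G'. is_ED_code n R Rc F G' \<and>
           (is_D_code n R Rc F G \<longrightarrow> is_D_code n R Rc F G') \<and>
           (\<integral>\<^sup>+ (x, y). ennreal (avg_dist d n x y) \<partial>(marg_XY n (induced_dist n R Rc pXZ F G')))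
              \<le> ennreal (\<Delta> + \<epsilon>1) + ui_sup d pX (\<epsilon>2 + 2 * \<epsilon>3) \<and>
           marg_Y n (induced_dist n R Rc pXZ F G') = seqM n pX"
proof -
  interpret cs: code_setup n R Rc pXZ F G
    by (rule code_setup.intro[OF src code rates(2)])
  let ?SX = "seqM n (borel :: 'x measure)"
  let ?SZ = "seqM n (borel :: 'z measure)"
  let ?SXZ = "?SX \<Otimes>\<^sub>M ?SZ"
  let ?SXY = "?SX \<Otimes>\<^sub>M ?SX"
  let ?Big = "?SXZ \<Otimes>\<^sub>M count_space (UNIV :: nat set) \<Otimes>\<^sub>M count_space (UNIV :: nat set) \<Otimes>\<^sub>M ?SX"
  let ?src = "source_dist n pXZ"
  define P1 where "P1 = induced_dist n R Rc pXZ F G"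
  have P1_eq: "P1 = ?src \<bind> cs.Phi cs.G0"
    unfolding P1_def by (rule cs.induced_eq[OF cs.G0_nice]) (simp add: cs.G0_def)
  have PhiM: "cs.Phi cs.G0 \<in> ?SXZ \<rightarrow>\<^sub>M prob_algebra ?Big" by (rule cs.Phi_meas[OF cs.G0_nice])
  have src_sp: "?src \<in> space (prob_algebra ?SXZ)"
    using cs.source_prob cs.source_sets by (simp add: space_prob_algebra)
  have P1_sp: "P1 \<in> space (prob_algebra ?Big)"
    unfolding P1_eq by (rule cs.in_prob_algebra_bind[OF src_sp PhiM])
  have P1_prob: "prob_space P1" and P1_sets: "sets P1 = sets ?Big"
    using P1_sp by (auto simp: space_prob_algebra)
  have P1_space: "space P1 = space ?Big" using P1_sets by (rule sets_eq_imp_space_eq)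
  have P1_ne: "space P1 \<noteq> {}" using P1_prob by (simp add: prob_space.not_empty)
  have xyM: "(\<lambda>p. (fst (fst p), snd (snd (snd p)))) \<in> P1 \<rightarrow>\<^sub>M ?SXY"
    by (subst measurable_cong_sets[OF P1_sets refl]) measurable
  have ycM: "(\<lambda>p. snd (snd (snd p))) \<in> P1 \<rightarrow>\<^sub>M ?SX"
    by (subst measurable_cong_sets[OF P1_sets refl]) measurable
  define \<mu>1 where "\<mu>1 = marg_XY n P1"
  define \<mu>Y where "\<mu>Y = marg_Y n P1"
  define \<nu> where "\<nu> = seqM n pX"
  have pX_prob: "prob_space pX" unfolding pX_def by (rule cs.pX_prob)
  have pX_sets: "sets pX = sets borel" unfolding pX_def by simp
  have \<nu>_prob: "prob_space \<nu>" unfolding \<nu>_def by (rule prob_space_PiM) (simp add: pX_prob)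
  have \<nu>_sets: "sets \<nu> = sets ?SX" unfolding \<nu>_def by (rule sets_PiM_cong) (simp_all add: pX_sets)
  have \<mu>1_alt: "\<mu>1 = distr P1 ?SXY (\<lambda>p. (fst (fst p), snd (snd (snd p))))" unfolding \<mu>1_def by (rule marg_XY_alt)
  have \<mu>1_prob: "prob_space \<mu>1" unfolding \<mu>1_alt by (rule prob_space.prob_space_distr[OF P1_prob xyM])
  have \<mu>1_sets: "sets \<mu>1 = sets ?SXY" unfolding \<mu>1_alt by simp
  have \<mu>Y_alt: "\<mu>Y = distr \<mu>1 ?SX snd"
  proof -
    have "distr \<mu>1 ?SX snd = distr P1 ?SX (snd \<circ> (\<lambda>p. (fst (fst p), snd (snd (snd p)))))"
      unfolding \<mu>1_alt by (rule distr_distr[OF _ xyM]) simp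
    then show ?thesis by (simp add: \<mu>Y_def marg_Y_alt comp_def)
  qed
  have \<mu>Y_prob: "prob_space \<mu>Y" unfolding \<mu>Y_alt
    by (rule prob_space.prob_space_distr[OF \<mu>1_prob]) (subst measurable_cong_sets[OF \<mu>1_sets refl], measurable)
  have \<mu>Y_sets: "sets \<mu>Y = sets ?SX" unfolding \<mu>Y_alt by simp
  define QY where "QY = distr Q ?SX snd"
  have QY_prob: "prob_space QY" unfolding QY_def
    by (rule prob_space.prob_space_distr[OF Q(1)]) (subst measurable_cong_sets[OF Q(2) refl], measurable)
  have fin: "finite_measure M" if "prob_space M" for M :: "'b measure"
    using that by (rule prob_space.finite_measure)
  have bnd1: "measure \<mu>Y B \<le> measure \<nu> B + (\<epsilon>2 + \<epsilon>3)" if B: "B \<in> sets \<mu>Y" for B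
  proof -
    have B': "B \<in> sets ?SX" using B \<mu>Y_sets by simp
    have A: "space ?SX \<times> B \<in> sets \<mu>1" using B' \<mu>1_sets by simp
    have "measure \<mu>Y B = measure \<mu>1 (space ?SX \<times> B)"
      unfolding \<mu>Y_alt by (rule marg_snd_measure[OF fin[OF \<mu>1_prob] \<mu>1_sets B'])
    moreover have "measure QY B = measure Q (space ?SX \<times> B)"
      unfolding QY_def by (rule marg_snd_measure[OF fin[OF Q(1)] Q(2) B'])
    moreover have "\<bar>measure \<mu>1 (space ?SX \<times> B) - measure Q (space ?SX \<times> B)\<bar> \<le> \<epsilon>3"
      using tv_le[OF P1_tv[folded P1_def \<mu>1_def] fin[OF \<mu>1_prob] fin[OF Q(1)] A] .
    moreover have "\<bar>measure QY B - measure \<nu> B\<bar> \<le> \<epsilon>2"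
      using tv_le[OF Q_tv[folded QY_def \<nu>_def] fin[OF QY_prob] fin[OF \<nu>_prob]] B' by (simp add: QY_def)
    ultimately show ?thesis by linarith
  qed
  have \<nu>_sets': "sets \<nu> = sets \<mu>Y" using \<nu>_sets \<mu>Y_sets by simp
  obtain r K where r: "r \<in> borel_measurable \<mu>Y" "\<And>x. 0 \<le> r x" "\<And>x. r x \<le> 1"
      "(\<integral>\<^sup>+x. ennreal (r x) \<partial>\<mu>Y) \<le> ennreal (\<epsilon>2 + \<epsilon>3)"
      "\<And>f. f \<in> borel_measurable \<mu>Y \<Longrightarrow> (\<integral>\<^sup>+x. f x \<partial>\<mu>Y) \<le> (\<integral>\<^sup>+x. f x \<partial>\<nu>) + (\<integral>\<^sup>+x. f x * ennreal (r x) \<partial>\<mu>Y)"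
    and K0: "K \<in> \<mu>Y \<rightarrow>\<^sub>M prob_algebra \<mu>Y" and bindK: "\<mu>Y \<bind> K = \<nu>"
    and Kbnd: "\<And>y B. y \<in> space \<mu>Y \<Longrightarrow> B \<in> sets \<mu>Y \<Longrightarrow> emeasure (K y) B \<le> indicator B y + ennreal (r y)"
    using tv_coupling[OF \<mu>Y_prob \<nu>_prob \<nu>_sets' bnd1] by blast
  have K: "K \<in> ?SX \<rightarrow>\<^sub>M prob_algebra ?SX"
    using K0 unfolding prob_algebra_cong[OF \<mu>Y_sets] measurable_cong_sets[OF \<mu>Y_sets refl] .
  define G' where "G' = (\<lambda>z j m. cs.G0 z j m \<bind> K)"
  have G'_nice: "cs.nice G'" unfolding G'_def by (rule cs.nice_bind[OF cs.G0_nice K])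
  have code': "is_ED_code n R Rc F G'"
  proof -
    have "\<forall>j\<in>{1..code_size n Rc}. \<forall>m\<in>{1..code_size n R}. (\<lambda>z. G' z j m) \<in> ?SZ \<rightarrow>\<^sub>M prob_algebra ?SX"
      using G'_nice by (simp add: cs.nice_def)
    then show ?thesis unfolding is_ED_code_def
      by (intro conjI code[unfolded is_ED_code_def, THEN conjunct1] code[unfolded is_ED_code_def, THEN conjunct2, THEN conjunct1])
  qed
  have Dcode: "is_D_code n R Rc F G \<longrightarrow> is_D_code n R Rc F G'"
    using code' by (simp add: is_D_code_def)
  define P2 where "P2 = induced_dist n R Rc pXZ F G'"
  have TK: "cs.T K \<in> ?Big \<rightarrow>\<^sub>M prob_algebra ?Big" by (rule cs.T_meas[OF K])
  have P2_eq: "P2 = P1 \<bind> cs.T K"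
  proof -
    have "P2 = ?src \<bind> cs.Phi G'"
      unfolding P2_def by (rule cs.induced_eq[OF G'_nice]) simp
    also have "\<dots> = ?src \<bind> (\<lambda>w. cs.Phi cs.G0 w \<bind> cs.T K)"
      by (rule bind_cong[OF refl]) (simp add: G'_def cs.source_space cs.Phi_bind[OF cs.G0_nice K])
    also have "\<dots> = P1 \<bind> cs.T K"
    proof -
      have "cs.Phi cs.G0 \<in> ?src \<rightarrow>\<^sub>M subprob_algebra ?Big"
        using measurable_prob_algebraD[OF PhiM] unfolding measurable_cong_sets[OF cs.source_sets refl] .
      from bind_assoc[OF this measurable_prob_algebraD[OF TK]] show ?thesis by (simp add: P1_eq)
    qed
    finally show ?thesis .
  qed
  have TK1: "cs.T K \<in> P1 \<rightarrow>\<^sub>M subprob_algebra ?Big"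
    using measurable_prob_algebraD[OF TK] unfolding measurable_cong_sets[OF P1_sets refl] .
  have Ksp: "K y \<in> space (prob_algebra ?SX)" if "y \<in> space ?SX" for y
    using measurable_space[OF K that] .
  have margY2: "marg_Y n P2 = \<nu>"
  proof -
    have "marg_Y n P2 = P1 \<bind> (\<lambda>p. distr (cs.T K p) ?SX (\<lambda>p. snd (snd (snd p))))"
      unfolding marg_Y_alt P2_eq by (rule distr_bind[OF TK1 P1_ne]) measurable
    also have "\<dots> = P1 \<bind> (\<lambda>p. K (snd (snd (snd p))))"
    proof (rule bind_cong[OF refl])
      fix p assume p: "p \<in> space P1"
      then have y: "snd (snd (snd p)) \<in> space ?SX" unfolding P1_space space_pair_measure by auto
      have Ks: "sets (K (snd (snd (snd p)))) = sets ?SX" using Ksp[OF y] by (simp add: space_prob_algebra)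
      have embM: "(\<lambda>y'. (fst p, fst (snd p), fst (snd (snd p)), y')) \<in> K (snd (snd (snd p))) \<rightarrow>\<^sub>M ?Big"
      proof -
        have fp: "fst p \<in> space ?SXZ" using p unfolding P1_space space_pair_measure by auto
        show ?thesis unfolding measurable_cong_sets[OF Ks refl] using fp by measurable
      qed
      have ycB: "(\<lambda>p. snd (snd (snd p))) \<in> ?Big \<rightarrow>\<^sub>M ?SX" by measurable
      have eq1: "distr (cs.T K p) ?SX (\<lambda>p. snd (snd (snd p))) = distr (K (snd (snd (snd p)))) ?SX ((\<lambda>p. snd (snd (snd p))) \<circ> (\<lambda>y'. (fst p, fst (snd p), fst (snd (snd p)), y')))"
        unfolding cs.T_def by (rule distr_distr[OF ycB embM])
      have "distr (cs.T K p) ?SX (\<lambda>p. snd (snd (snd p))) = distr (K (snd (snd (snd p)))) ?SX (\<lambda>y. y)"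
        using eq1 by (simp add: comp_def)
      also have "\<dots> = K (snd (snd (snd p)))" by (rule distr_id2) (simp add: Ks)
      finally show "distr (cs.T K p) ?SX (\<lambda>p. snd (snd (snd p))) = K (snd (snd (snd p)))" .
    qed
    also have "\<dots> = \<mu>Y \<bind> K"
      unfolding \<mu>Y_def marg_Y_alt
      by (rule bind_distr[symmetric, OF ycM measurable_prob_algebraD[OF K] P1_ne])
    finally show ?thesis using bindK by simp
  qed
  define Kx where "Kx q = distr (K (snd q)) ?SXY (\<lambda>y'. (fst q, y'))" for q
  have KxM: "Kx \<in> ?SXY \<rightarrow>\<^sub>M prob_algebra ?SXY"
    unfolding Kx_def
  proof (rule measurable_distr_prob_space2)
    show "(\<lambda>q. K (snd q)) \<in> ?SXY \<rightarrow>\<^sub>M prob_algebra ?SX" by (rule measurable_compose[OF measurable_snd K])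
    show "(\<lambda>(q, y'). (fst q, y')) \<in> ?SXY \<Otimes>\<^sub>M ?SX \<rightarrow>\<^sub>M ?SXY" by measurable
  qed
  define \<mu>2 where "\<mu>2 = marg_XY n P2"
  have \<mu>2_eq: "\<mu>2 = \<mu>1 \<bind> Kx"
  proof -
    have "\<mu>2 = P1 \<bind> (\<lambda>p. distr (cs.T K p) ?SXY (\<lambda>p. (fst (fst p), snd (snd (snd p)))))"
      unfolding \<mu>2_def marg_XY_alt P2_eq by (rule distr_bind[OF TK1 P1_ne]) measurable
    also have "\<dots> = P1 \<bind> (\<lambda>p. Kx (fst (fst p), snd (snd (snd p))))"
    proof (rule bind_cong[OF refl])
      fix p assume p: "p \<in> space P1"
      then have y: "snd (snd (snd p)) \<in> space ?SX" unfolding P1_space space_pair_measure by auto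
      have Ks: "sets (K (snd (snd (snd p)))) = sets ?SX" using Ksp[OF y] by (simp add: space_prob_algebra)
      have embM: "(\<lambda>y'. (fst p, fst (snd p), fst (snd (snd p)), y')) \<in> K (snd (snd (snd p))) \<rightarrow>\<^sub>M ?Big"
      proof -
        have fp: "fst p \<in> space ?SXZ" using p unfolding P1_space space_pair_measure by auto
        show ?thesis unfolding measurable_cong_sets[OF Ks refl] using fp by measurable
      qed
      have xyB: "(\<lambda>p. (fst (fst p), snd (snd (snd p)))) \<in> ?Big \<rightarrow>\<^sub>M ?SXY" by measurable
      have eq1: "distr (cs.T K p) ?SXY (\<lambda>p. (fst (fst p), snd (snd (snd p)))) = distr (K (snd (snd (snd p)))) ?SXY ((\<lambda>p. (fst (fst p), snd (snd (snd p)))) \<circ> (\<lambda>y'. (fst p, fst (snd p), fst (snd (snd p)), y')))"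
        unfolding cs.T_def by (rule distr_distr[OF xyB embM])
      show "distr (cs.T K p) ?SXY (\<lambda>p. (fst (fst p), snd (snd (snd p)))) = Kx (fst (fst p), snd (snd (snd p)))"
        using eq1 by (simp add: comp_def Kx_def)
    qed
    also have "\<dots> = \<mu>1 \<bind> Kx"
      unfolding \<mu>1_alt by (rule bind_distr[symmetric, OF xyM measurable_prob_algebraD[OF KxM] P1_ne])
    finally show ?thesis .
  qed
  have \<mu>1_sp: "\<mu>1 \<in> space (prob_algebra ?SXY)" using \<mu>1_prob \<mu>1_sets by (simp add: space_prob_algebra)
  have \<mu>2_sp: "\<mu>2 \<in> space (prob_algebra ?SXY)" unfolding \<mu>2_eq by (rule cs.in_prob_algebra_bind[OF \<mu>1_sp KxM])
  have \<mu>2_prob: "prob_space \<mu>2" and \<mu>2_sets: "sets \<mu>2 = sets ?SXY"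
    using \<mu>2_sp by (auto simp: space_prob_algebra)
  have \<mu>1_space: "space \<mu>1 = space ?SXY" using \<mu>1_sets by (rule sets_eq_imp_space_eq)
  have \<mu>Y_space: "space \<mu>Y = space ?SX" using \<mu>Y_sets by (rule sets_eq_imp_space_eq)
  have rM: "r \<in> borel_measurable ?SX" using r(1) unfolding measurable_cong_sets[OF \<mu>Y_sets refl] .
  have Kx_bnd: "emeasure (Kx q) A \<le> indicator A q + ennreal (r (snd q))"
    if q: "q \<in> space ?SXY" and A: "A \<in> sets ?SXY" for q A
  proof -
    have y: "snd q \<in> space ?SX" using q unfolding space_pair_measure by auto
    have Ks: "sets (K (snd q)) = sets ?SX" using Ksp[OF y] by (simp add: space_prob_algebra)
    have Ksp': "space (K (snd q)) = space ?SX" using Ks by (rule sets_eq_imp_space_eq)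
    have fq: "fst q \<in> space ?SX" using q unfolding space_pair_measure by auto
    have mapM: "(\<lambda>y'. (fst q, y')) \<in> ?SX \<rightarrow>\<^sub>M ?SXY" using fq by measurable
    have B: "(\<lambda>y'. (fst q, y')) -` A \<inter> space ?SX \<in> sets ?SX" by (rule measurable_sets[OF mapM A])
    have "emeasure (Kx q) A = emeasure (K (snd q)) ((\<lambda>y'. (fst q, y')) -` A \<inter> space ?SX)"
      unfolding Kx_def using mapM A by (subst emeasure_distr) (simp_all add: Ksp' measurable_cong_sets[OF Ks refl])
    also have "\<dots> \<le> indicator ((\<lambda>y'. (fst q, y')) -` A \<inter> space ?SX) (snd q) + ennreal (r (snd q))"
      by (rule Kbnd) (use y B \<mu>Y_space \<mu>Y_sets in auto)
    also have "indicator ((\<lambda>y'. (fst q, y')) -` A \<inter> space ?SX) (snd q) = (indicator A q :: ennreal)"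
      using y by (simp add: indicator_def)
    finally show ?thesis .
  qed
  have bnd2: "measure \<mu>2 A \<le> measure Q A + (\<epsilon>2 + 2 * \<epsilon>3)" if A: "A \<in> sets \<mu>2" for A
  proof -
    have A': "A \<in> sets ?SXY" using A \<mu>2_sets by simp
    have "emeasure \<mu>2 A = (\<integral>\<^sup>+q. emeasure (Kx q) A \<partial>\<mu>1)"
      unfolding \<mu>2_eq by (rule emeasure_bind_prob_algebra[OF \<mu>1_sp KxM A'])
    also have "\<dots> \<le> (\<integral>\<^sup>+q. indicator A q + ennreal (r (snd q)) \<partial>\<mu>1)"
      by (rule nn_integral_mono) (use Kx_bnd A' \<mu>1_space in auto)
    also have "\<dots> = emeasure \<mu>1 A + (\<integral>\<^sup>+q. ennreal (r (snd q)) \<partial>\<mu>1)"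
    proof -
      have "(\<lambda>q. ennreal (r (snd q))) \<in> borel_measurable \<mu>1"
        unfolding measurable_cong_sets[OF \<mu>1_sets refl] using rM by measurable
      moreover have "(indicator A :: _ \<Rightarrow> ennreal) \<in> borel_measurable \<mu>1"
        using A' \<mu>1_sets by simp
      ultimately show ?thesis using A' \<mu>1_sets by (subst nn_integral_add) auto
    qed
    also have "(\<integral>\<^sup>+q. ennreal (r (snd q)) \<partial>\<mu>1) = (\<integral>\<^sup>+y. ennreal (r y) \<partial>\<mu>Y)"
    proof -
      have sndM: "snd \<in> \<mu>1 \<rightarrow>\<^sub>M ?SX" unfolding measurable_cong_sets[OF \<mu>1_sets refl] by measurable
      have "(\<lambda>y. ennreal (r y)) \<in> borel_measurable ?SX" using rM by measurable
      then show ?thesis unfolding \<mu>Y_alt by (subst nn_integral_distr[OF sndM]) auto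
    qed
    finally have "emeasure \<mu>2 A \<le> emeasure \<mu>1 A + ennreal (\<epsilon>2 + \<epsilon>3)"
      using r(4) by (meson add_left_mono order_trans)
    then have "ennreal (measure \<mu>2 A) \<le> ennreal (measure \<mu>1 A + (\<epsilon>2 + \<epsilon>3))"
      using eps by (simp add: finite_measure.emeasure_eq_measure[OF fin[OF \<mu>2_prob]] finite_measure.emeasure_eq_measure[OF fin[OF \<mu>1_prob]] ennreal_plus)
    then have "measure \<mu>2 A \<le> measure \<mu>1 A + (\<epsilon>2 + \<epsilon>3)"
      using eps by (subst (asm) ennreal_le_iff) (auto intro: add_nonneg_nonneg)
    moreover have "\<bar>measure \<mu>1 A - measure Q A\<bar> \<le> \<epsilon>3"
      using tv_le[OF P1_tv[folded P1_def \<mu>1_def] fin[OF \<mu>1_prob] fin[OF Q(1)]] A' \<mu>1_sets by simp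
    ultimately show ?thesis by linarith
  qed
  have Qsets': "sets Q = sets \<mu>2" using Q(2) \<mu>2_sets by simp
  obtain g K2 where g: "g \<in> borel_measurable \<mu>2" "\<And>x. 0 \<le> g x" "\<And>x. g x \<le> 1"
      "(\<integral>\<^sup>+x. ennreal (g x) \<partial>\<mu>2) \<le> ennreal (\<epsilon>2 + 2 * \<epsilon>3)"
      "\<And>f. f \<in> borel_measurable \<mu>2 \<Longrightarrow> (\<integral>\<^sup>+x. f x \<partial>\<mu>2) \<le> (\<integral>\<^sup>+x. f x \<partial>Q) + (\<integral>\<^sup>+x. f x * ennreal (g x) \<partial>\<mu>2)"
    and "K2 \<in> \<mu>2 \<rightarrow>\<^sub>M prob_algebra \<mu>2" "\<mu>2 \<bind> K2 = Q"
      "\<And>y B. y \<in> space \<mu>2 \<Longrightarrow> B \<in> sets \<mu>2 \<Longrightarrow> emeasure (K2 y) B \<le> indicator B y + ennreal (g y)"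
    using tv_coupling[OF \<mu>2_prob Q(1) Qsets' bnd2] by blast
  have src_ne: "space ?src \<noteq> {}" using cs.source_prob by (simp add: prob_space.not_empty)
  have \<mu>1_ne: "space \<mu>1 \<noteq> {}" using \<mu>1_prob by (simp add: prob_space.not_empty)
  have fstM1: "fst \<in> \<mu>1 \<rightarrow>\<^sub>M ?SX" unfolding measurable_cong_sets[OF \<mu>1_sets refl] by measurable
  have margX1: "distr \<mu>1 ?SX fst = \<nu>"
  proof -
    have xcB: "(\<lambda>p. fst (fst p)) \<in> ?Big \<rightarrow>\<^sub>M ?SX" by measurable
    have PhiM': "cs.Phi cs.G0 \<in> ?src \<rightarrow>\<^sub>M subprob_algebra ?Big"
      using measurable_prob_algebraD[OF PhiM] unfolding measurable_cong_sets[OF cs.source_sets refl] .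
    have "distr \<mu>1 ?SX fst = distr P1 ?SX (fst \<circ> (\<lambda>p. (fst (fst p), snd (snd (snd p)))))"
      unfolding \<mu>1_alt by (rule distr_distr[OF _ xyM]) simp
    also have "\<dots> = distr P1 ?SX (\<lambda>p. fst (fst p))" by (simp add: comp_def)
    also have "\<dots> = ?src \<bind> (\<lambda>w. distr (cs.Phi cs.G0 w) ?SX (\<lambda>p. fst (fst p)))"
      unfolding P1_eq by (rule distr_bind[OF PhiM' src_ne xcB])
    also have "\<dots> = ?src \<bind> (\<lambda>w. return ?SX (fst w))"
      by (rule bind_cong[OF refl]) (simp add: cs.source_space cs.Phi_x[OF cs.G0_nice])
    also have "\<dots> = distr ?src ?SX fst"
      by (rule bind_return_distr'[OF src_ne]) (simp add: measurable_cong_sets[OF cs.source_sets refl])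
    also have "\<dots> = \<nu>" unfolding \<nu>_def pX_def by (rule cs.source_X)
    finally show ?thesis .
  qed
  have margX2: "distr \<mu>2 ?SX fst = \<nu>"
  proof -
    have KxM1: "Kx \<in> \<mu>1 \<rightarrow>\<^sub>M subprob_algebra ?SXY"
      using measurable_prob_algebraD[OF KxM] unfolding measurable_cong_sets[OF \<mu>1_sets refl] .
    have "distr \<mu>2 ?SX fst = \<mu>1 \<bind> (\<lambda>q. distr (Kx q) ?SX fst)"
      unfolding \<mu>2_eq by (rule distr_bind[OF KxM1 \<mu>1_ne]) simp
    also have "\<dots> = \<mu>1 \<bind> (\<lambda>q. return ?SX (fst q))"
    proof (rule bind_cong[OF refl])
      fix q assume "q \<in> space \<mu>1"
      then have q: "q \<in> space ?SXY" using \<mu>1_space by simp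
      have y: "snd q \<in> space ?SX" and fq: "fst q \<in> space ?SX" using q unfolding space_pair_measure by auto
      have Ks: "sets (K (snd q)) = sets ?SX" and Kp: "prob_space (K (snd q))"
        using Ksp[OF y] by (simp_all add: space_prob_algebra)
      have mapM: "(\<lambda>y'. (fst q, y')) \<in> K (snd q) \<rightarrow>\<^sub>M ?SXY"
        unfolding measurable_cong_sets[OF Ks refl] using fq by measurable
      have "distr (Kx q) ?SX fst = distr (K (snd q)) ?SX (fst \<circ> (\<lambda>y'. (fst q, y')))"
        unfolding Kx_def by (rule distr_distr[OF _ mapM]) simp
      also have "\<dots> = distr (K (snd q)) ?SX (\<lambda>_. fst q)" by (simp add: comp_def)
      also have "\<dots> = return ?SX (fst q)" by (rule prob_space.distr_const[OF Kp fq])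
      finally show "distr (Kx q) ?SX fst = return ?SX (fst q)" .
    qed
    also have "\<dots> = distr \<mu>1 ?SX fst" by (rule bind_return_distr'[OF \<mu>1_ne fstM1])
    finally show ?thesis using margX1 by simp
  qed
  have P2_sp: "P2 \<in> space (prob_algebra ?Big)" unfolding P2_eq by (rule cs.in_prob_algebra_bind[OF P1_sp TK])
  have P2_sets: "sets P2 = sets ?Big" using P2_sp by (simp add: space_prob_algebra)
  have margY2': "distr \<mu>2 ?SX snd = \<nu>"
  proof -
    have xyM2: "(\<lambda>p. (fst (fst p), snd (snd (snd p)))) \<in> P2 \<rightarrow>\<^sub>M ?SXY"
      by (subst measurable_cong_sets[OF P2_sets refl]) measurable
    have "distr \<mu>2 ?SX snd = distr P2 ?SX (snd \<circ> (\<lambda>p. (fst (fst p), snd (snd (snd p)))))"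
      unfolding \<mu>2_def marg_XY_alt by (rule distr_distr[OF _ xyM2]) simp
    also have "\<dots> = marg_Y n P2" by (simp add: marg_Y_alt comp_def)
    finally show ?thesis using margY2 by simp
  qed
  have comp_law: "distr \<nu> borel (\<lambda>x. x t) = pX" if t: "t < n" for t
  proof -
    have "distr \<nu> borel (\<lambda>x. x t) = distr \<nu> pX (\<lambda>x. x t)" by (rule distr_cong) (simp_all add: pX_sets)
    also have "\<dots> = pX" unfolding \<nu>_def by (rule distr_PiM_component) (use pX_prob t in auto)
    finally show ?thesis .
  qed
  have lawX: "distr \<mu>2 borel (\<lambda>q. fst q t) = pX" and lawY: "distr \<mu>2 borel (\<lambda>q. snd q t) = pX" if t: "t < n" for t
  proof -
    have cM: "(\<lambda>x. x t) \<in> ?SX \<rightarrow>\<^sub>M borel" by (rule measurable_component_singleton) (simp add: t)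
    have f2: "fst \<in> \<mu>2 \<rightarrow>\<^sub>M ?SX" "snd \<in> \<mu>2 \<rightarrow>\<^sub>M ?SX"
      unfolding measurable_cong_sets[OF \<mu>2_sets refl] by measurable
    show "distr \<mu>2 borel (\<lambda>q. fst q t) = pX"
      using distr_distr[OF cM f2(1)] margX2 comp_law[OF t] by (simp add: comp_def)
    show "distr \<mu>2 borel (\<lambda>q. snd q t) = pX"
      using distr_distr[OF cM f2(2)] margY2' comp_law[OF t] by (simp add: comp_def)
  qed
  let ?\<tau> = "\<epsilon>2 + 2 * \<epsilon>3"
  have gM2: "g \<in> borel_measurable ?SXY" using g(1) unfolding measurable_cong_sets[OF \<mu>2_sets refl] .
  have \<mu>2_ne: "space \<mu>2 \<noteq> {}" using \<mu>2_prob by (simp add: prob_space.not_empty)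
  have ui: "(\<integral>\<^sup>+q. ennreal (d (fst q t) (snd q t)) * ennreal (g q) \<partial>\<mu>2) \<le> ui_sup d pX ?\<tau>"
    if t: "t < n" for t
  proof -
    let ?Tgt = "(borel :: 'x measure) \<Otimes>\<^sub>M (borel :: 'x measure) \<Otimes>\<^sub>M count_space (UNIV :: bool set)"
    have cM: "(\<lambda>x. x t) \<in> ?SX \<rightarrow>\<^sub>M borel" by (rule measurable_component_singleton) (simp add: t)
    have ct1: "(\<lambda>q. fst q t) \<in> ?SXY \<rightarrow>\<^sub>M borel" by (rule measurable_compose[OF measurable_fst cM])
    have ct2: "(\<lambda>q. snd q t) \<in> ?SXY \<rightarrow>\<^sub>M borel" by (rule measurable_compose[OF measurable_snd cM])
    define kern where "kern q = distr (measure_pmf (bernoulli_pmf (g q))) ?Tgt (\<lambda>b. (fst q t, snd q t, b))" for q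
    have bernM: "(\<lambda>q. measure_pmf (bernoulli_pmf (g q))) \<in> ?SXY \<rightarrow>\<^sub>M prob_algebra (count_space UNIV)"
      by (rule measurable_bernoulli_pmf[OF gM2]) (simp add: g(2,3))
    have mapM: "(\<lambda>(q, b). (fst q t, snd q t, b)) \<in> ?SXY \<Otimes>\<^sub>M count_space UNIV \<rightarrow>\<^sub>M ?Tgt"
    proof -
      have "(\<lambda>p. (fst (fst p) t, snd (fst p) t, snd p)) \<in> ?SXY \<Otimes>\<^sub>M count_space UNIV \<rightarrow>\<^sub>M ?Tgt"
        by (intro measurable_Pair measurable_compose[OF measurable_fst ct1] measurable_compose[OF measurable_fst ct2] measurable_snd)
      then show ?thesis by (simp add: case_prod_beta')
    qed
    have kernM: "kern \<in> ?SXY \<rightarrow>\<^sub>M prob_algebra ?Tgt"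
      unfolding kern_def by (rule measurable_distr_prob_space2[OF bernM mapM])
    have kernM2: "kern \<in> \<mu>2 \<rightarrow>\<^sub>M subprob_algebra ?Tgt"
      using measurable_prob_algebraD[OF kernM] unfolding measurable_cong_sets[OF \<mu>2_sets refl] .
    define M where "M = \<mu>2 \<bind> kern"
    have M_sp: "M \<in> space (prob_algebra ?Tgt)" unfolding M_def by (rule cs.in_prob_algebra_bind[OF \<mu>2_sp kernM])
    have M_prob: "prob_space M" and M_sets: "sets M = sets ?Tgt" using M_sp by (auto simp: space_prob_algebra)
    define B where "B = (UNIV :: 'x set) \<times> (UNIV :: 'x set) \<times> {True}"
    have B_sets: "B \<in> sets ?Tgt" unfolding B_def by (intro pair_measureI) auto
    have bm: "(\<lambda>b. (fst q t, snd q t, b)) \<in> count_space UNIV \<rightarrow>\<^sub>M ?Tgt" for q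
      by (intro measurable_Pair measurable_const measurable_ident_sets) auto
    have bern_prob: "prob_space (measure_pmf p)" for p :: "bool pmf" by (rule measure_pmf.prob_space_axioms)
    have lawM: "distr M borel h = pX" if hM: "h \<in> ?Tgt \<rightarrow>\<^sub>M borel" and law: "distr \<mu>2 borel (\<lambda>q. h (fst q t, snd q t, True)) = pX"
      and hc: "\<And>q b. h (fst q t, snd q t, b) = h (fst q t, snd q t, True)" for h
    proof -
      have "distr M borel h = \<mu>2 \<bind> (\<lambda>q. distr (kern q) borel h)"
        unfolding M_def by (rule distr_bind[OF kernM2 \<mu>2_ne hM])
      also have "\<dots> = \<mu>2 \<bind> (\<lambda>q. return borel (h (fst q t, snd q t, True)))"
      proof (rule bind_cong[OF refl])
        fix q
        have fe: "h \<circ> (\<lambda>b. (fst q t, snd q t, b)) = (\<lambda>_. h (fst q t, snd q t, True))"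
          by (rule ext) (unfold comp_def, rule hc)
        have "distr (kern q) borel h = distr (measure_pmf (bernoulli_pmf (g q))) borel (h \<circ> (\<lambda>b. (fst q t, snd q t, b)))"
          unfolding kern_def by (rule distr_distr[OF hM]) (use bm in \<open>simp add: measurable_count_space_eq1\<close>)
        also have "\<dots> = distr (measure_pmf (bernoulli_pmf (g q))) borel (\<lambda>_. h (fst q t, snd q t, True))"
          unfolding fe ..
        also have "\<dots> = return borel (h (fst q t, snd q t, True))"
          by (rule prob_space.distr_const[OF bern_prob]) simp
        finally show "distr (kern q) borel h = return borel (h (fst q t, snd q t, True))" .
      qed
      also have "\<dots> = distr \<mu>2 borel (\<lambda>q. h (fst q t, snd q t, True))"
      proof (rule bind_return_distr'[OF \<mu>2_ne])
        have "(\<lambda>q. h (fst q t, snd q t, True)) \<in> ?SXY \<rightarrow>\<^sub>M borel"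
          using measurable_compose[OF measurable_Pair[OF ct1 measurable_Pair[OF ct2 measurable_const]] hM]
          by simp
        then show "(\<lambda>q. h (fst q t, snd q t, True)) \<in> \<mu>2 \<rightarrow>\<^sub>M borel"
          unfolding measurable_cong_sets[OF \<mu>2_sets refl] .
      qed
      finally show ?thesis using law by simp
    qed
    have XM: "fst \<in> ?Tgt \<rightarrow>\<^sub>M borel" by measurable
    have YM: "(\<lambda>\<omega>. fst (snd \<omega>)) \<in> ?Tgt \<rightarrow>\<^sub>M borel" by measurable
    have lawX': "distr M borel fst = pX" by (rule lawM[OF XM]) (simp_all add: lawX[OF t])
    have lawY': "distr M borel (\<lambda>\<omega>. fst (snd \<omega>)) = pX" by (rule lawM[OF YM]) (simp_all add: lawY[OF t])
    have emB: "emeasure (kern q) B = ennreal (g q)" for q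
    proof -
      have "emeasure (kern q) B = emeasure (measure_pmf (bernoulli_pmf (g q))) ((\<lambda>b. (fst q t, snd q t, b)) -` B \<inter> space (measure_pmf (bernoulli_pmf (g q))))"
        unfolding kern_def by (rule emeasure_distr[OF _ B_sets]) (use bm in \<open>simp add: measurable_count_space_eq1\<close>)
      also have "(\<lambda>b. (fst q t, snd q t, b)) -` B \<inter> space (measure_pmf (bernoulli_pmf (g q))) = {True}"
        by (auto simp: B_def)
      also have "emeasure (measure_pmf (bernoulli_pmf (g q))) {True} = ennreal (g q)"
        using g(2,3) by (simp add: emeasure_bernoulli_pmf)
      finally show ?thesis .
    qed
    have MB: "measure M B \<le> ?\<tau>"
    proof -
      have "emeasure M B = (\<integral>\<^sup>+q. emeasure (kern q) B \<partial>\<mu>2)"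
        unfolding M_def by (rule emeasure_bind_prob_algebra[OF \<mu>2_sp kernM B_sets])
      also have "\<dots> \<le> ennreal ?\<tau>" using g(4) by (simp add: emB)
      finally have "ennreal (measure M B) \<le> ennreal ?\<tau>"
        by (simp add: finite_measure.emeasure_eq_measure[OF fin[OF M_prob]])
      then show ?thesis using eps by (subst (asm) ennreal_le_iff) auto
    qed
    have dM: "(\<lambda>\<omega>. d (fst \<omega>) (fst (snd \<omega>))) \<in> borel_measurable ?Tgt"
    proof -
      have "(\<lambda>\<omega>. (fst \<omega>, fst (snd \<omega>))) \<in> ?Tgt \<rightarrow>\<^sub>M borel \<Otimes>\<^sub>M borel" by measurable
      from measurable_compose[OF this d_meas] show ?thesis by simp
    qed
    have intM: "(\<lambda>\<omega>. ennreal (d (fst \<omega>) (fst (snd \<omega>))) * indicator B \<omega>) \<in> borel_measurable ?Tgt"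
      using dM B_sets by measurable
    have "(\<integral>\<^sup>+\<omega>. ennreal (d (fst \<omega>) (fst (snd \<omega>))) * indicator B \<omega> \<partial>M)
        = (\<integral>\<^sup>+q. (\<integral>\<^sup>+\<omega>. ennreal (d (fst \<omega>) (fst (snd \<omega>))) * indicator B \<omega> \<partial>kern q) \<partial>\<mu>2)"
      unfolding M_def by (rule nn_integral_bind[OF intM kernM2])
    also have "\<dots> = (\<integral>\<^sup>+q. ennreal (d (fst q t) (snd q t)) * ennreal (g q) \<partial>\<mu>2)"
    proof (rule nn_integral_cong)
      fix q
      have "(\<integral>\<^sup>+\<omega>. ennreal (d (fst \<omega>) (fst (snd \<omega>))) * indicator B \<omega> \<partial>kern q)
          = (\<integral>\<^sup>+b. ennreal (d (fst q t) (snd q t)) * indicator B (fst q t, snd q t, b) \<partial>measure_pmf (bernoulli_pmf (g q)))"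
        unfolding kern_def
        by (subst nn_integral_distr) (use bm intM in \<open>simp_all add: measurable_count_space_eq1\<close>)
      also have "\<dots> = ennreal (d (fst q t) (snd q t)) * ennreal (g q)"
        using g(2,3) by (subst nn_integral_bernoulli_pmf) (auto simp: B_def)
      finally show "(\<integral>\<^sup>+\<omega>. ennreal (d (fst \<omega>) (fst (snd \<omega>))) * indicator B \<omega> \<partial>kern q) = ennreal (d (fst q t) (snd q t)) * ennreal (g q)" .
    qed
    finally have eqI: "(\<integral>\<^sup>+q. ennreal (d (fst q t) (snd q t)) * ennreal (g q) \<partial>\<mu>2)
        = (\<integral>\<^sup>+\<omega>. ennreal (d (fst \<omega>) (fst (snd \<omega>))) * indicator B \<omega> \<partial>M)" by simp
    have XM': "fst \<in> M \<rightarrow>\<^sub>M borel" using XM unfolding measurable_cong_sets[OF M_sets refl] .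
    have YM': "(\<lambda>\<omega>. fst (snd \<omega>)) \<in> M \<rightarrow>\<^sub>M borel" using YM unfolding measurable_cong_sets[OF M_sets refl] .
    have B_sets': "B \<in> sets M" using B_sets M_sets by simp
    have mem: "(M, fst, \<lambda>\<omega>. fst (snd \<omega>), B) \<in> {(M :: ('x \<times> 'x \<times> bool) measure, X, Y, B).
         prob_space M \<and> X \<in> measurable M borel \<and> Y \<in> measurable M borel \<and>
         distr M borel X = pX \<and> distr M borel Y = pX \<and>
         B \<in> sets M \<and> measure M B \<le> ?\<tau>}"
      using M_prob XM' YM' lawX' lawY' B_sets' MB by simp
    show ?thesis unfolding ui_sup_def eqI
      by (rule SUP_upper2[OF mem]) simp
  qed
  define f where "f q = ennreal (avg_dist d n (fst q) (snd q))" for q :: "(nat \<Rightarrow> 'x) \<times> (nat \<Rightarrow> 'x)"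
  have dtM: "(\<lambda>q. d (fst q t) (snd q t)) \<in> borel_measurable ?SXY" if t: "t < n" for t
  proof -
    have cM: "(\<lambda>x. x t) \<in> ?SX \<rightarrow>\<^sub>M borel" by (rule measurable_component_singleton) (simp add: t)
    have "(\<lambda>q. (fst q t, snd q t)) \<in> ?SXY \<rightarrow>\<^sub>M borel \<Otimes>\<^sub>M borel"
      by (intro measurable_Pair measurable_compose[OF measurable_fst cM] measurable_compose[OF measurable_snd cM])
    from measurable_compose[OF this d_meas] show ?thesis by simp
  qed
  have fM: "f \<in> borel_measurable ?SXY"
  proof -
    have "(\<lambda>q. (\<Sum>t<n. d (fst q t) (snd q t)) / real n) \<in> borel_measurable ?SXY"
      by (intro borel_measurable_divide borel_measurable_sum borel_measurable_const dtM) simp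
    then show ?thesis unfolding f_def avg_dist_def by measurable
  qed
  have fM2: "f \<in> borel_measurable \<mu>2" using fM unfolding measurable_cong_sets[OF \<mu>2_sets refl] .
  have f_eq: "f q * ennreal (g q) = ennreal (1 / real n) * (\<Sum>t<n. ennreal (d (fst q t) (snd q t)) * ennreal (g q))" for q
  proof -
    have "f q = ennreal (1 / real n) * ennreal (\<Sum>t<n. d (fst q t) (snd q t))"
      unfolding f_def avg_dist_def by (simp add: ennreal_mult[symmetric] sum_nonneg d_nonneg)
    also have "ennreal (\<Sum>t<n. d (fst q t) (snd q t)) = (\<Sum>t<n. ennreal (d (fst q t) (snd q t)))"
      by (rule sum_ennreal[symmetric]) (simp add: d_nonneg)
    finally show ?thesis by (simp add: sum_distrib_right mult.assoc)
  qed
  have fg: "(\<integral>\<^sup>+q. f q * ennreal (g q) \<partial>\<mu>2) \<le> ui_sup d pX ?\<tau>"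
  proof -
    have meas_t: "(\<lambda>q. ennreal (d (fst q t) (snd q t)) * ennreal (g q)) \<in> borel_measurable \<mu>2" if "t \<in> {..<n}" for t
    proof -
      have t: "t < n" using that by simp
      note [measurable] = dtM[OF t] gM2
      have "(\<lambda>q. ennreal (d (fst q t) (snd q t)) * ennreal (g q)) \<in> borel_measurable ?SXY" by measurable
      then show ?thesis unfolding measurable_cong_sets[OF \<mu>2_sets refl] .
    qed
    have "(\<integral>\<^sup>+q. f q * ennreal (g q) \<partial>\<mu>2) = ennreal (1 / real n) * (\<Sum>t<n. \<integral>\<^sup>+q. ennreal (d (fst q t) (snd q t)) * ennreal (g q) \<partial>\<mu>2)"
    proof -
      have s1: "(\<integral>\<^sup>+q. (\<Sum>t<n. ennreal (d (fst q t) (snd q t)) * ennreal (g q)) \<partial>\<mu>2)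
          = (\<Sum>t<n. \<integral>\<^sup>+q. ennreal (d (fst q t) (snd q t)) * ennreal (g q) \<partial>\<mu>2)"
        by (rule nn_integral_sum) (rule meas_t)
      show ?thesis unfolding f_eq
        by (subst nn_integral_cmult) (auto intro!: borel_measurable_sum meas_t simp: s1)
    qed
    also have "\<dots> \<le> ennreal (1 / real n) * (\<Sum>t<n. ui_sup d pX ?\<tau>)"
      by (intro mult_left_mono sum_mono ui) auto
    also have "\<dots> = ennreal (1 / real n) * ennreal (real n) * ui_sup d pX ?\<tau>"
      by (simp add: mult.assoc ennreal_of_nat_eq_real_of_nat)
    also have "ennreal (1 / real n) * ennreal (real n) = 1"
      using n_pos by (simp add: ennreal_mult[symmetric])
    finally show ?thesis by simp
  qed
  have dist_bound: "(\<integral>\<^sup>+ (x, y). ennreal (avg_dist d n x y) \<partial>\<mu>2) \<le> ennreal (\<Delta> + \<epsilon>1) + ui_sup d pX ?\<tau>"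
  proof -
    have e1: "(\<integral>\<^sup>+ (x, y). ennreal (avg_dist d n x y) \<partial>\<mu>2) = (\<integral>\<^sup>+ q. f q \<partial>\<mu>2)"
      by (simp add: f_def split_beta')
    have e2: "(\<integral>\<^sup>+ (x, y). ennreal (avg_dist d n x y) \<partial>Q) = (\<integral>\<^sup>+ q. f q \<partial>Q)"
      by (simp add: f_def split_beta')
    have "(\<integral>\<^sup>+ q. f q \<partial>\<mu>2) \<le> (\<integral>\<^sup>+ q. f q \<partial>Q) + (\<integral>\<^sup>+q. f q * ennreal (g q) \<partial>\<mu>2)"
      by (rule g(5)[OF fM2])
    also have "\<dots> \<le> ennreal (\<Delta> + \<epsilon>1) + ui_sup d pX ?\<tau>"
      using Q_dist e2 fg by (intro add_mono) auto
    finally show ?thesis using e1 by simp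
  qed
  show ?thesis
  proof (intro exI[of _ G'] conjI)
    show "is_ED_code n R Rc F G'" by (rule code')
    show "is_D_code n R Rc F G \<longrightarrow> is_D_code n R Rc F G'" by (rule Dcode)
    show "(\<integral>\<^sup>+ (x, y). ennreal (avg_dist d n x y) \<partial>(marg_XY n (induced_dist n R Rc pXZ F G')))
              \<le> ennreal (\<Delta> + \<epsilon>1) + ui_sup d pX (\<epsilon>2 + 2 * \<epsilon>3)"
      using dist_bound unfolding \<mu>2_def P2_def .
    show "marg_Y n (induced_dist n R Rc pXZ F G') = seqM n pX"
      using margY2 unfolding P2_def \<nu>_def .
  qed
qed

end
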